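(* Let $\phi$ be a Drinfeld $A[\underline{t}_s]$-module over $\mathbb{T}_s$ with $\phi_\theta=\theta+A_1\tau+\dots+A_r\tau^r$, $A_r\in\mathbb{T}_s^\times$, let $\lambda\in\Lambda_\phi$, and let $f_\lambda(z)=\sum_{n\ge0}\exp_\phi(\lambda/\theta^{n+1})z^n$ be its Anderson generating function. Then: (a) $F_{\delta^0}(\lambda)=\operatorname{Res}_{z=\theta}f_\lambda(z)=-\lambda$; (b) for every $1\le j\le r-1$, \[ F_{\delta^j}(\lambda)=\sum_{n\ge0}\exp_\phi\Big(\frac{\lambda}{\theta^{n+1}}\Big)^{(j)}\theta^n=f_\lambda^{(j)}(z)\big|_{z=\theta}. \]
   Context: $\mathbb{F}_q$ finite field, $\theta,t_1,\dots,t_s,z$ independent variables, $A[\underline{t}_s]=\mathbb{F}_q[\theta,t_1,\dots,t_s]$, $\mathbb{F}_q[\underline{t}_s]=\mathbb{F}_q[t_1,\dots,t_s]$. $\mathbb{C}_\infty$: completion of an algebraic closure of $\mathbb{F}_q((1/\theta))$, $|\theta|_\infty=q$. $\mathbb{T}_s$: Tate algebra of power series in $t_1,\dots,t_s$ over $\mathbb{C}_\infty$ with coefficients tending to $0$, Gauss norm $\|\cdot\|_\infty$. $\tau$ raises $\mathbb{C}_\infty$-coefficients to the $q$-th power, $f^{(n)}=\tau^n(f)$, applied coefficientwise to power series in $z$ (fixing $z$). $\mathbb{T}_s[\tau]$, $\mathbb{T}_s[[\tau]]$: twisted rings with $\tau f=f^{(1)}\tau$, acting by $\sum a_i\tau^i(f)=\sum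 a_if^{(i)}$. A Drinfeld $A[\underline{t}_s]$-module is an $\mathbb{F}_q[\underline{t}_s]$-algebra homomorphism $\phi:A[\underline{t}_s]\to\mathbb{T}_s[\tau]$ with $\phi_\theta=\theta+A_1\tau+\dots+A_r\tau^r$. $\exp_\phi=\sum\alpha_i\tau^i$: unique series with $\alpha_0=1$, $\exp_\phi a=\phi_a\exp_\phi$; it converges on $\mathbb{T}_s$; $\Lambda_\phi=\ker\exp_\phi$. One has $f_\lambda(z)=\sum_{n\ge0}\alpha_n\lambda^{(n)}/(\theta^{q^n}-z)$, a function of $z$ with simple poles at $z=\theta^{q^n}$, and $\operatorname{Res}_{z=\theta}f_\lambda$ denotes its residue at $z=\theta$; for $j\ge1$, $f_\lambda^{(j)}$ converges for $|z|_\infty\le|\theta|_\infty$ so can be evaluated at $z=\theta$. A biderivation is an $\mathbb{F}_q[\underline{t}_s]$-linear map $\eta:A[\underline{t}_s]\to\tau\mathbb{T}_s[\tau]$ with $\eta_{ab}=a\eta_b+\eta_a\phi_b$; it is determined by $\eta_\theta$. $\delta^0$ is the biderivation $\delta^0_a=\phi_a-a$, and for $1\le j\le r-1$, $\delta^j$ is the biderivation with $\delta^j_\theta=\tau^j$. For a biderivation $\eta$, $F_\eta$ is the unique element of $\tau\mathbb{T}_s[[\tau]]$ with $F_\eta\theta-\theta F_\eta=\eta_\theta\exp_\phi$; it converges on every element of $\mathbb{T}_s$. *)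

theory Defs
  imports Complex_Main "HOL-Computational_Algebra.Polynomial"
begin

text \<open>A field 'c with a real-valued absolute value v is (isometrically isomorphic to)
the completion of an algebraic closure of F_q((1/theta)) with |theta| = q, iff:
v is a non-archimedean absolute value, 'c has characteristic p where q is a power of p,
'c is complete and algebraically closed, v theta = q, and the elements algebraic over
F_q(theta) are dense.\<close>

definition Fq :: "nat \<Rightarrow> 'c::field set" where
  "Fq q = {x. x ^ q = x}"

definition Fq_theta_poly :: "nat \<Rightarrow> 'c::field \<Rightarrow> 'c set" where
  "Fq_theta_poly q \<theta> = {poly Q \<theta> | Q. \<forall>i. coeff Q i \<in> Fq q}"

definition is_Cinf :: "nat \<Rightarrow> ('c::field \<Rightarrow> real) \<Rightarrow> 'c \<Rightarrow> bool" where
  "is_Cinf q v \<theta> \<longleftrightarrow>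
     (\<exists>p e. prime p \<and> e > 0 \<and> q = p ^ e \<and> of_nat p = (0::'c)) \<and>
     (\<forall>x. v x \<ge> 0 \<and> (v x = 0 \<longleftrightarrow> x = 0)) \<and>
     (\<forall>x y. v (x * y) = v x * v y) \<and>
     (\<forall>x y. v (x + y) \<le> max (v x) (v y)) \<and>
     (\<forall>X::nat \<Rightarrow> 'c. (\<forall>\<epsilon>>0. \<exists>N. \<forall>m\<ge>N. \<forall>n\<ge>N. v (X m - X n) < \<epsilon>)
         \<longrightarrow> (\<exists>L. \<forall>\<epsilon>>0. \<exists>N. \<forall>n\<ge>N. v (X n - L) < \<epsilon>)) \<and>
     (\<forall>P::'c poly. degree P > 0 \<longrightarrow> (\<exists>x. poly P x = 0)) \<and>
     v \<theta> = real q \<and>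
     (\<forall>x. \<forall>\<epsilon>>0. \<exists>y. v (x - y) < \<epsilon> \<and>
         (\<exists>P::'c poly. P \<noteq> 0 \<and> (\<forall>i. coeff P i \<in> Fq_theta_poly q \<theta>) \<and> poly P y = 0))"

text \<open>An element of T_s is represented by its coefficient function on exponent vectors
e :: nat \<Rightarrow> nat (e i = exponent of t_(i+1)); elements of T_s vanish on exponent vectors
involving variables t_i with i > s, and their coefficients tend to 0.\<close>

type_synonym 'c tate = "(nat \<Rightarrow> nat) \<Rightarrow> 'c"

definition in_tate :: "nat \<Rightarrow> ('c::field \<Rightarrow> real) \<Rightarrow> 'c tate \<Rightarrow> bool" where
  "in_tate s v f \<longleftrightarrow> (\<forall>e. (\<exists>i\<ge>s. e i \<noteq> 0) \<longrightarrow> f e = 0) \<and>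
                    (\<forall>\<epsilon>>0. finite {e. v (f e) \<ge> \<epsilon>})"

definition tzero :: "'c::field tate" where "tzero = (\<lambda>e. 0)"
definition tconst :: "'c::field \<Rightarrow> 'c tate" where
  "tconst c = (\<lambda>e. if (\<forall>i. e i = 0) then c else 0)"
definition tone :: "'c::field tate" where "tone = tconst 1"
definition tadd :: "'c::field tate \<Rightarrow> 'c tate \<Rightarrow> 'c tate" where
  "tadd f g = (\<lambda>e. f e + g e)"
definition tneg :: "'c::field tate \<Rightarrow> 'c tate" where
  "tneg f = (\<lambda>e. - f e)"
definition tscale :: "'c::field \<Rightarrow> 'c tate \<Rightarrow> 'c tate" where
  "tscale c f = (\<lambda>e. c * f e)"
definition tmul :: "'c::field tate \<Rightarrow> 'c tate \<Rightarrow> 'c tate" where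
  "tmul f g = (\<lambda>e. \<Sum>a\<in>{a. \<forall>i. a i \<le> e i}. f a * g (\<lambda>i. e i - a i))"
definition tsum_fin :: "('a \<Rightarrow> 'c::field tate) \<Rightarrow> 'a set \<Rightarrow> 'c tate" where
  "tsum_fin F K = (\<lambda>e. \<Sum>k\<in>K. F k e)"

text \<open>tau^n: raise the C_infinity-coefficients to the power q^n.\<close>
definition tfrobn :: "nat \<Rightarrow> nat \<Rightarrow> 'c::field tate \<Rightarrow> 'c tate" where
  "tfrobn q n f = (\<lambda>e. (f e) ^ (q ^ n))"

text \<open>Convergence for the Gauss norm (sup of the absolute values of coefficients).\<close>
definition tate_tendsto :: "('c::field \<Rightarrow> real) \<Rightarrow> (nat \<Rightarrow> 'c tate) \<Rightarrow> 'c tate \<Rightarrow> bool" where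
  "tate_tendsto v X L \<longleftrightarrow> (\<forall>\<epsilon>>0. \<exists>N. \<forall>n\<ge>N. \<forall>e. v (X n e - L e) < \<epsilon>)"

definition tate_sums :: "('c::field \<Rightarrow> real) \<Rightarrow> (nat \<Rightarrow> 'c tate) \<Rightarrow> 'c tate \<Rightarrow> bool" where
  "tate_sums v g S \<longleftrightarrow> tate_tendsto v (\<lambda>N. tsum_fin g {..<N}) S"

text \<open>Action of a twisted series sum c_i tau^i on f: sum c_i f^(i).\<close>
definition tau_apply :: "('c::field \<Rightarrow> real) \<Rightarrow> nat \<Rightarrow> (nat \<Rightarrow> 'c tate) \<Rightarrow> 'c tate \<Rightarrow> 'c tate" where
  "tau_apply v q c f = (THE S. tate_sums v (\<lambda>i. tmul (c i) (tfrobn q i f)) S)"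

text \<open>phi_theta = theta + A 1 tau + ... + A r tau^r.  The exponential exp_phi = sum alpha_i tau^i
is the unique series with alpha_0 = 1 and exp_phi theta = phi_theta exp_phi (which, phi being
an F_q[t_s]-algebra homomorphism, is equivalent to exp_phi a = phi_a exp_phi for all a);
the condition below is this identity compared coefficientwise.\<close>
definition exp_rel :: "nat \<Rightarrow> 'c::field \<Rightarrow> nat \<Rightarrow> (nat \<Rightarrow> 'c tate) \<Rightarrow> (nat \<Rightarrow> 'c tate) \<Rightarrow> bool" where
  "exp_rel q \<theta> r A \<alpha> \<longleftrightarrow> \<alpha> 0 = tone \<and>
     (\<forall>i. tscale (\<theta> ^ (q ^ i)) (\<alpha> i) =
          tadd (tscale \<theta> (\<alpha> i))
               (tsum_fin (\<lambda>k. tmul (A k) (tfrobn q k (\<alpha> (i - k)))) {k. 1 \<le> k \<and> k \<le> r \<and> k \<le> i}))"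

definition exp_coeffs :: "nat \<Rightarrow> 'c::field \<Rightarrow> nat \<Rightarrow> (nat \<Rightarrow> 'c tate) \<Rightarrow> nat \<Rightarrow> 'c tate" where
  "exp_coeffs q \<theta> r A = (THE \<alpha>. exp_rel q \<theta> r A \<alpha>)"

definition exp_apply :: "('c::field \<Rightarrow> real) \<Rightarrow> nat \<Rightarrow> 'c \<Rightarrow> nat \<Rightarrow> (nat \<Rightarrow> 'c tate) \<Rightarrow> 'c tate \<Rightarrow> 'c tate" where
  "exp_apply v q \<theta> r A f = tau_apply v q (exp_coeffs q \<theta> r A) f"

definition period_lattice :: "nat \<Rightarrow> ('c::field \<Rightarrow> real) \<Rightarrow> nat \<Rightarrow> 'c \<Rightarrow> nat \<Rightarrow> (nat \<Rightarrow> 'c tate) \<Rightarrow> 'c tate set" where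
  "period_lattice s v q \<theta> r A = {l. in_tate s v l \<and>
       tate_sums v (\<lambda>i. tmul (exp_coeffs q \<theta> r A i) (tfrobn q i l)) tzero}"

text \<open>A biderivation eta is determined by eta_theta = sum_{k>=1} eta_k tau^k (given by its
coefficient function with eta_0 = 0).  F_eta = sum_{i>=1} c_i tau^i is the unique element of
tau T_s[[tau]] with F_eta theta - theta F_eta = eta_theta exp_phi (coefficientwise below).\<close>
definition F_rel :: "nat \<Rightarrow> 'c::field \<Rightarrow> (nat \<Rightarrow> 'c tate) \<Rightarrow> (nat \<Rightarrow> 'c tate) \<Rightarrow> (nat \<Rightarrow> 'c tate) \<Rightarrow> bool" where
  "F_rel q \<theta> \<alpha> \<eta> c \<longleftrightarrow> c 0 = tzero \<and>
     (\<forall>i. tadd (tscale (\<theta> ^ (q ^ i)) (c i)) (tneg (tscale \<theta> (c i))) =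
          tsum_fin (\<lambda>k. tmul (\<eta> k) (tfrobn q k (\<alpha> (i - k)))) {k. 1 \<le> k \<and> k \<le> i})"

definition F_coeffs :: "nat \<Rightarrow> 'c::field \<Rightarrow> nat \<Rightarrow> (nat \<Rightarrow> 'c tate) \<Rightarrow> (nat \<Rightarrow> 'c tate) \<Rightarrow> nat \<Rightarrow> 'c tate" where
  "F_coeffs q \<theta> r A \<eta> = (THE c. F_rel q \<theta> (exp_coeffs q \<theta> r A) \<eta> c)"

text \<open>delta^0_theta = phi_theta - theta, delta^j_theta = tau^j.\<close>
definition delta0 :: "nat \<Rightarrow> (nat \<Rightarrow> 'c::field tate) \<Rightarrow> nat \<Rightarrow> 'c tate" where
  "delta0 r A = (\<lambda>k. if 1 \<le> k \<and> k \<le> r then A k else tzero)"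
definition deltaj :: "nat \<Rightarrow> nat \<Rightarrow> 'c::field tate" where
  "deltaj j = (\<lambda>k. if k = j then tone else tzero)"

definition agf_coeff :: "('c::field \<Rightarrow> real) \<Rightarrow> nat \<Rightarrow> 'c \<Rightarrow> nat \<Rightarrow> (nat \<Rightarrow> 'c tate) \<Rightarrow> 'c tate \<Rightarrow> nat \<Rightarrow> 'c tate" where
  "agf_coeff v q \<theta> r A lam n = exp_apply v q \<theta> r A (tscale (inverse (\<theta> ^ (n + 1))) lam)"

definition agf_twist_eval :: "('c::field \<Rightarrow> real) \<Rightarrow> nat \<Rightarrow> 'c \<Rightarrow> nat \<Rightarrow> (nat \<Rightarrow> 'c tate) \<Rightarrow> 'c tate \<Rightarrow> nat \<Rightarrow> 'c \<Rightarrow> 'c tate" where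
  "agf_twist_eval v q \<theta> r A lam j z =
     (THE S. tate_sums v (\<lambda>n. tscale (z ^ n) (tfrobn q j (agf_coeff v q \<theta> r A lam n))) S)"

text \<open>The meromorphic continuation of f_lambda: f_lambda(z) = sum_n alpha_n lambda^(n) / (theta^(q^n) - z).\<close>
definition agf_mero_terms :: "nat \<Rightarrow> 'c::field \<Rightarrow> nat \<Rightarrow> (nat \<Rightarrow> 'c tate) \<Rightarrow> 'c tate \<Rightarrow> 'c \<Rightarrow> nat \<Rightarrow> 'c tate" where
  "agf_mero_terms q \<theta> r A lam z n =
     tscale (inverse (\<theta> ^ (q ^ n) - z)) (tmul (exp_coeffs q \<theta> r A n) (tfrobn q n lam))"

definition agf_has_residue_at_theta :: "('c::field \<Rightarrow> real) \<Rightarrow> nat \<Rightarrow> 'c \<Rightarrow> nat \<Rightarrow> (nat \<Rightarrow> 'c tate) \<Rightarrow> 'c tate \<Rightarrow> 'c tate \<Rightarrow> bool" where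
  "agf_has_residue_at_theta v q \<theta> r A lam R \<longleftrightarrow>
     (\<forall>\<epsilon>>0. \<exists>\<delta>>0. \<forall>z. 0 < v (z - \<theta>) \<and> v (z - \<theta>) < \<delta> \<longrightarrow>
        (\<exists>S. tate_sums v (agf_mero_terms q \<theta> r A lam z) S \<and>
             (\<forall>e. v ((z - \<theta>) * S e - R e) < \<epsilon>)))"

end

theory Submission imports Defs "HOL-Computational_Algebra.Primes" begin

lemma char_eq:
  assumes "prime p" "of_nat p = (0::'c::field)"
  shows "CHAR('c) = p"
proof -
  have d: "CHAR('c) dvd p" using assms(2) by (simp add: of_nat_eq_0_iff_char_dvd)
  have n1: "CHAR('c) \<noteq> Suc 0" by simp
  have "\<forall>m. m dvd p \<longrightarrow> m = Suc 0 \<or> m = p" using assms(1) unfolding prime_nat_iff by simp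
  then have "CHAR('c) dvd p \<longrightarrow> CHAR('c) = Suc 0 \<or> CHAR('c) = p" by (rule spec)
  then show ?thesis using n1 d by simp
qed

lemma frob_add:
  fixes x y :: "'c::field"
  assumes "prime p" "of_nat p = (0::'c)"
  shows "(x + y) ^ (p ^ k) = x ^ (p ^ k) + y ^ (p ^ k)"
proof -
  have ce: "CHAR('c) = p" by (rule char_eq[OF assms])
  have pc: "prime CHAR('c)" unfolding ce by (rule assms(1))
  have "p ^ k = CHAR('c) ^ k" unfolding ce ..
  from freshmans_dream'[OF pc this] show ?thesis .
qed

lemma frob_sum:
  fixes f :: "'b \<Rightarrow> 'c::field"
  assumes "prime p" "of_nat p = (0::'c)"
  shows "(sum f K) ^ (p ^ k) = (\<Sum>i\<in>K. (f i) ^ (p ^ k))"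
proof -
  have ce: "CHAR('c) = p" by (rule char_eq[OF assms])
  have pc: "prime CHAR('c)" unfolding ce by (rule assms(1))
  have "p ^ k = CHAR('c) ^ k" unfolding ce ..
  from freshmans_dream_sum'[OF pc this] show ?thesis .
qed

lemma frob_diff:
  fixes x y :: "'c::field"
  assumes "prime p" "of_nat p = (0::'c)"
  shows "(x - y) ^ (p ^ k) = x ^ (p ^ k) - y ^ (p ^ k)"
proof -
  have "x ^ (p ^ k) = ((x - y) + y) ^ (p ^ k)" by simp
  also have "\<dots> = (x - y) ^ (p ^ k) + y ^ (p ^ k)" by (rule frob_add[OF assms])
  finally show ?thesis by simp
qed

locale ultra =
  fixes v :: "'c::field \<Rightarrow> real"
  assumes v_nonneg: "v x \<ge> 0"
    and v_eq0: "v x = 0 \<longleftrightarrow> x = 0"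
    and v_mult: "v (x * y) = v x * v y"
    and v_ultra: "v (x + y) \<le> max (v x) (v y)"
    and v_complete: "(\<forall>\<epsilon>>0. \<exists>N. \<forall>m\<ge>N. \<forall>n\<ge>N. v ((X::nat \<Rightarrow> 'c) m - X n) < \<epsilon>)
         \<Longrightarrow> (\<exists>L. \<forall>\<epsilon>>0. \<exists>N. \<forall>n\<ge>N. v (X n - L) < \<epsilon>)"
begin

lemma v0[simp]: "v 0 = 0" using v_eq0 by simp

lemma v1[simp]: "v 1 = 1"
proof -
  have "v 1 = v 1 * v 1" using v_mult[of 1 1] by simp
  moreover have "v 1 \<noteq> 0" using v_eq0[of 1] by simp
  ultimately show ?thesis by simp
qed

lemma v_minus[simp]: "v (- x) = v x"
proof -
  have "v (-1) * v (-1) = 1" using v_mult[of "-1" "-1"] by simp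
  moreover have "v (-1) \<ge> 0" by (rule v_nonneg)
  ultimately have "v (-1) = 1"
    using power2_eq_1_iff[of "v (-1)"] by (auto simp: power2_eq_square)
  then show ?thesis using v_mult[of "-1" x] by simp
qed

lemma v_commute: "v (x - y) = v (y - x)"
  using v_minus[of "x - y"] by simp

lemma v_inverse: "v (inverse x) = inverse (v x)"
proof (cases "x = 0")
  case False
  then have "v x * v (inverse x) = 1" using v_mult[of x "inverse x"] by simp
  from inverse_unique[OF this] show ?thesis by simp
qed simp

lemma v_power: "v (x ^ n) = v x ^ n"
  by (induction n) (simp_all add: v_mult)

lemma v_diff_le: "v (x - z) \<le> max (v (x - y)) (v (y - z))"
  using v_ultra[of "x - y" "y - z"] by simp

lemma v_sum_le:
  assumes "\<And>k. k \<in> K \<Longrightarrow> v (f k) \<le> B" "0 \<le> B"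
  shows "v (sum f K) \<le> B"
  using assms
proof (induction K rule: infinite_finite_induct)
  case (insert x F)
  then have "v (f x) \<le> B" "v (sum f F) \<le> B" by auto
  then show ?case using v_ultra[of "f x" "sum f F"] insert(1,2) by (simp add: max_def split: if_splits)
qed simp_all

lemma v_sum_less:
  assumes "\<And>k. k \<in> K \<Longrightarrow> v (f k) < B" "0 < B"
  shows "v (sum f K) < B"
  using assms
proof (induction K rule: infinite_finite_induct)
  case (insert x F)
  then have "v (f x) < B" "v (sum f F) < B" by auto
  then show ?case using v_ultra[of "f x" "sum f F"] insert(1,2) by (simp add: max_def split: if_splits)
qed simp_all

definition csums :: "(nat \<Rightarrow> 'c) \<Rightarrow> 'c \<Rightarrow> bool" where
  "csums g s \<longleftrightarrow> (\<forall>\<epsilon>>0. \<exists>N. \<forall>n\<ge>N. v (sum g {..<n} - s) < \<epsilon>)"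

lemma csums_unique:
  assumes "csums g s" "csums g t" shows "s = t"
proof (rule ccontr)
  assume "s \<noteq> t"
  then have e: "v (s - t) > 0" using v_eq0[of "s - t"] v_nonneg[of "s - t"] by simp
  obtain N1 where N1: "\<forall>n\<ge>N1. v (sum g {..<n} - s) < v (s - t)" using assms(1) e unfolding csums_def by blast
  obtain N2 where N2: "\<forall>n\<ge>N2. v (sum g {..<n} - t) < v (s - t)" using assms(2) e unfolding csums_def by blast
  let ?P = "sum g {..<max N1 N2}"
  have "v (s - t) \<le> max (v (s - ?P)) (v (?P - t))" by (rule v_diff_le)
  moreover have "v (s - ?P) < v (s - t)" using N1 v_commute by (metis max.cobounded1)
  moreover have "v (?P - t) < v (s - t)" using N2 by simp
  ultimately show False by simp
qed

lemma csums_add: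
  assumes "csums f s" "csums g t" shows "csums (\<lambda>n. f n + g n) (s + t)"
  unfolding csums_def
proof (intro allI impI)
  fix \<epsilon> :: real assume "\<epsilon> > 0"
  then obtain N1 N2 where N1: "\<forall>n\<ge>N1. v (sum f {..<n} - s) < \<epsilon>"
    and N2: "\<forall>n\<ge>N2. v (sum g {..<n} - t) < \<epsilon>" using assms unfolding csums_def by meson
  show "\<exists>N. \<forall>n\<ge>N. v (sum (\<lambda>n. f n + g n) {..<n} - (s + t)) < \<epsilon>"
  proof (intro exI allI impI)
    fix n assume "n \<ge> max N1 N2"
    then have "v (sum f {..<n} - s) < \<epsilon>" "v (sum g {..<n} - t) < \<epsilon>" using N1 N2 by auto
    moreover have eq: "sum (\<lambda>n. f n + g n) {..<n} - (s + t) = (sum f {..<n} - s) + (sum g {..<n} - t)"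
      by (simp add: sum.distrib)
    ultimately show "v (sum (\<lambda>n. f n + g n) {..<n} - (s + t)) < \<epsilon>"
      by (subst eq) (rule le_less_trans[OF v_ultra], simp)
  qed
qed

lemma csums_cmult:
  assumes "csums f s" shows "csums (\<lambda>n. c * f n) (c * s)"
proof (cases "c = 0")
  case True
  then show ?thesis unfolding csums_def by simp
next
  case False
  then have vc: "v c > 0" using v_eq0[of c] v_nonneg[of c] by simp
  show ?thesis unfolding csums_def
  proof (intro allI impI)
    fix \<epsilon> :: real assume "\<epsilon> > 0"
    then have "\<epsilon> / v c > 0" using vc by simp
    then obtain N where N: "\<forall>n\<ge>N. v (sum f {..<n} - s) < \<epsilon> / v c" using assms unfolding csums_def by blast
    show "\<exists>N. \<forall>n\<ge>N. v (sum (\<lambda>n. c * f n) {..<n} - c * s) < \<epsilon>"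
    proof (intro exI allI impI)
      fix n assume "n \<ge> N"
      then have "v (sum f {..<n} - s) < \<epsilon> / v c" using N by simp
      then have "v c * v (sum f {..<n} - s) < \<epsilon>" using vc by (simp add: field_simps)
      moreover have "sum (\<lambda>n. c * f n) {..<n} - c * s = c * (sum f {..<n} - s)"
        by (simp add: sum_distrib_left right_diff_distrib)
      ultimately show "v (sum (\<lambda>n. c * f n) {..<n} - c * s) < \<epsilon>" by (simp add: v_mult)
    qed
  qed
qed

lemma csums_zero: "csums (\<lambda>n. 0) 0"
  unfolding csums_def by simp

lemma csums_diff:
  assumes "csums f s" "csums g t" shows "csums (\<lambda>n. f n - g n) (s - t)"
  using csums_add[OF assms(1) csums_cmult[OF assms(2), of "-1"]] by simp

lemma csums_sum:
  assumes "finite I" "\<And>i. i \<in> I \<Longrightarrow> csums (f i) (s i)"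
  shows "csums (\<lambda>n. \<Sum>i\<in>I. f i n) (\<Sum>i\<in>I. s i)"
  using assms
proof (induction I rule: finite_induct)
  case empty
  then show ?case using csums_zero by simp
next
  case (insert x F)
  then show ?case using csums_add[of "f x" "s x"] by simp
qed

lemma csums_cong: "(\<And>n. f n = g n) \<Longrightarrow> csums f s \<Longrightarrow> csums g s"
proof -
  assume "\<And>n. f n = g n" "csums f s"
  moreover have "f = g" using calculation(1) by auto
  ultimately show ?thesis by simp
qed

lemma csums_bound:
  assumes "csums g s" "0 \<le> B" "\<And>n. v (g n) \<le> B"
  shows "v s \<le> B"
proof (rule ccontr)
  assume "\<not> v s \<le> B"
  then have gt: "v s > B" by simp
  then have "v s - B > 0" by simp
  then obtain N where N: "\<forall>n\<ge>N. v (sum g {..<n} - s) < v s - B" using assms(1) unfolding csums_def by blast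
  let ?P = "sum g {..<N}"
  have "v ?P \<le> B" using v_sum_le[of "{..<N}" g B] assms by simp
  moreover have "v (s - ?P) < v s - B" using N v_commute by (metis order_refl)
  moreover have "v s \<le> max (v (s - ?P)) (v ?P)" using v_ultra[of "s - ?P" ?P] by simp
  ultimately show False using assms(2) gt by linarith
qed

lemma csums_drop0:
  assumes "csums g s"
  shows "csums (\<lambda>n. if n = 0 then 0 else g n) (s - g 0)"
  unfolding csums_def
proof (intro allI impI)
  fix \<epsilon> :: real assume "\<epsilon> > 0"
  then obtain N where N: "\<forall>n\<ge>N. v (sum g {..<n} - s) < \<epsilon>" using assms unfolding csums_def by blast
  show "\<exists>N. \<forall>n\<ge>N. v (sum (\<lambda>n. if n = 0 then 0 else g n) {..<n} - (s - g 0)) < \<epsilon>"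
  proof (intro exI allI impI)
    fix n assume n: "n \<ge> Suc N"
    have "sum g {..<n} = g 0 + sum g ({..<n} - {0})"
      using n by (subst sum.remove[of _ 0]) auto
    moreover have "sum (\<lambda>n. if n = 0 then 0 else g n) {..<n} = sum g ({..<n} - {0})"
      using n by (subst sum.remove[of _ 0]) (auto intro!: sum.cong)
    ultimately have eq: "sum (\<lambda>n. if n = 0 then 0 else g n) {..<n} - (s - g 0) = sum g {..<n} - s"
      by simp
    have "v (sum g {..<n} - s) < \<epsilon>" using N n by simp
    then show "v (sum (\<lambda>n. if n = 0 then 0 else g n) {..<n} - (s - g 0)) < \<epsilon>" by (subst eq)
  qed
qed

lemma csums_reindex:
  assumes "csums g s" "\<And>i. i < j \<Longrightarrow> g i = 0"
  shows "csums (\<lambda>m. g (m + j)) s"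
  unfolding csums_def
proof (intro allI impI)
  fix \<epsilon> :: real assume "\<epsilon> > 0"
  then obtain N where N: "\<forall>n\<ge>N. v (sum g {..<n} - s) < \<epsilon>" using assms unfolding csums_def by blast
  show "\<exists>N. \<forall>n\<ge>N. v (sum (\<lambda>m. g (m + j)) {..<n} - s) < \<epsilon>"
  proof (intro exI allI impI)
    fix n assume n: "n \<ge> N"
    have "sum g {..<n + j} = sum g {..<j} + sum g {j..<n + j}"
      by (simp add: sum.atLeastLessThan_concat[symmetric] lessThan_atLeast0 )
    also have "sum g {..<j} = 0" using assms(2) by simp
    also have "sum g {j..<n + j} = sum (\<lambda>m. g (m + j)) {0..<n}"
      using sum.shift_bounds_nat_ivl[of g 0 j n] by simp
    finally have "sum (\<lambda>m. g (m + j)) {..<n} = sum g {..<n + j}" by (simp add: lessThan_atLeast0)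
    then show "v (sum (\<lambda>m. g (m + j)) {..<n} - s) < \<epsilon>" using N n by simp
  qed
qed


lemma tate_sums_pw:
  assumes "tate_sums v g S" shows "csums (\<lambda>n. g n e) (S e)"
  using assms unfolding tate_sums_def tate_tendsto_def csums_def tsum_fin_def by blast

lemma tate_sums_unique:
  assumes "tate_sums v g S" "tate_sums v g T" shows "S = T"
proof
  fix e show "S e = T e" using csums_unique[OF tate_sums_pw[OF assms(1)] tate_sums_pw[OF assms(2)]] .
qed

lemma tate_sums_the:
  assumes "tate_sums v g S" shows "(THE S. tate_sums v g S) = S"
  using assms tate_sums_unique by blast

lemma sum_diff_ivl:
  fixes g :: "nat \<Rightarrow> 'c"
  assumes "n \<le> m" shows "sum g {..<m} - sum g {..<n} = sum g {n..<m}"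
  using sum_diff_nat_ivl[of 0 n m g] assms by (simp add: lessThan_atLeast0)

lemma tate_sums_exists:
  assumes "\<And>\<epsilon>. \<epsilon> > 0 \<Longrightarrow> \<exists>N. \<forall>n\<ge>N. \<forall>e. v (g n e) < \<epsilon>"
  shows "\<exists>S. tate_sums v g S"
proof -
  have cauchy: "v (sum (\<lambda>k. g k e) {..<m} - sum (\<lambda>k. g k e) {..<n}) < \<epsilon>"
    if "\<forall>n\<ge>N. \<forall>e. v (g n e) < \<epsilon>" "m \<ge> N" "n \<ge> N" "\<epsilon> > 0" for N m n e \<epsilon>
  proof (cases "n \<le> m")
    case True
    have "v (sum (\<lambda>k. g k e) {n..<m}) < \<epsilon>" using that by (intro v_sum_less) auto
    then show ?thesis using sum_diff_ivl[OF True] by simp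
  next
    case False
    then have "v (sum (\<lambda>k. g k e) {m..<n}) < \<epsilon>" using that by (intro v_sum_less) auto
    then show ?thesis using sum_diff_ivl[of m n "\<lambda>k. g k e"] False
      v_commute[of "sum (\<lambda>k. g k e) {..<m}" "sum (\<lambda>k. g k e) {..<n}"] by simp
  qed
  have "\<exists>L. \<forall>\<epsilon>>0. \<exists>N. \<forall>n\<ge>N. v (sum (\<lambda>k. g k e) {..<n} - L) < \<epsilon>" for e
  proof (rule v_complete[where X="\<lambda>n. sum (\<lambda>k. g k e) {..<n}"], intro allI impI)
    fix \<epsilon> :: real assume "\<epsilon> > 0"
    then obtain N where "\<forall>n\<ge>N. \<forall>e. v (g n e) < \<epsilon>" using assms by blast
    then show "\<exists>N. \<forall>m\<ge>N. \<forall>n\<ge>N. v (sum (\<lambda>k. g k e) {..<m} - sum (\<lambda>k. g k e) {..<n}) < \<epsilon>"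
      using cauchy \<open>\<epsilon> > 0\<close> by blast
  qed
  then obtain S where S: "\<And>e. \<forall>\<epsilon>>0. \<exists>N. \<forall>n\<ge>N. v (sum (\<lambda>k. g k e) {..<n} - S e) < \<epsilon>"
    by metis
  have "tate_sums v g S" unfolding tate_sums_def tate_tendsto_def tsum_fin_def
  proof (intro allI impI)
    fix \<epsilon> :: real assume ep: "\<epsilon> > 0"
    then obtain N where N: "\<forall>n\<ge>N. \<forall>e. v (g n e) < \<epsilon>" using assms by blast
    show "\<exists>N. \<forall>n\<ge>N. \<forall>e. v ((\<Sum>k\<in>{..<n}. g k e) - S e) < \<epsilon>"
    proof (intro exI allI impI)
      fix n e assume n: "n \<ge> N"
      obtain N' where N': "\<forall>m\<ge>N'. v (sum (\<lambda>k. g k e) {..<m} - S e) < \<epsilon>" using S ep by blast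
      let ?m = "max n N'"
      have a: "v (sum (\<lambda>k. g k e) {..<?m} - S e) < \<epsilon>" using N' by simp
      have b: "v (sum (\<lambda>k. g k e) {..<n} - sum (\<lambda>k. g k e) {..<?m}) < \<epsilon>"
        using cauchy[OF N _ _ ep] n by simp
      have "v (sum (\<lambda>k. g k e) {..<n} - S e) \<le> max (v (sum (\<lambda>k. g k e) {..<n} - sum (\<lambda>k. g k e) {..<?m})) (v (sum (\<lambda>k. g k e) {..<?m} - S e))"
        by (rule v_diff_le)
      then show "v ((\<Sum>k\<in>{..<n}. g k e) - S e) < \<epsilon>" using a b by simp
    qed
  qed
  then show ?thesis by blast
qed

lemma tate_sums_terms:
  assumes "tate_sums v g S" "\<epsilon> > 0"
  shows "\<exists>N. \<forall>n\<ge>N. \<forall>e. v (g n e) < \<epsilon>"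
proof -
  obtain N where N: "\<forall>n\<ge>N. \<forall>e. v (tsum_fin g {..<n} e - S e) < \<epsilon>"
    using assms unfolding tate_sums_def tate_tendsto_def by blast
  show ?thesis
  proof (intro exI allI impI)
    fix n e assume n: "n \<ge> N"
    have "g n e = (tsum_fin g {..<Suc n} e - S e) - (tsum_fin g {..<n} e - S e)"
      by (simp add: tsum_fin_def)
    moreover have "v (tsum_fin g {..<Suc n} e - S e) < \<epsilon>" "v (tsum_fin g {..<n} e - S e) < \<epsilon>"
      using N n by auto
    ultimately show "v (g n e) < \<epsilon>"
      using v_diff_le[of "tsum_fin g {..<Suc n} e" "tsum_fin g {..<n} e" "S e"]
        v_commute[of "S e" "tsum_fin g {..<n} e"] by simp
  qed
qed

definition bdd :: "'c tate \<Rightarrow> bool" where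
  "bdd f \<longleftrightarrow> (\<exists>B\<ge>0. \<forall>e. v (f e) \<le> B)"

lemma in_tate_bdd:
  assumes "in_tate s v f" shows "bdd f"
proof -
  let ?E = "{e. v (f e) \<ge> 1}"
  have fin: "finite ?E" using assms unfolding in_tate_def by simp
  let ?B = "1 + (\<Sum>e\<in>?E. v (f e))"
  have nn: "(\<Sum>e\<in>?E. v (f e)) \<ge> 0" by (intro sum_nonneg) (simp add: v_nonneg)
  have "v (f e) \<le> ?B" for e
  proof (cases "e \<in> ?E")
    case True
    then have "v (f e) \<le> (\<Sum>e\<in>?E. v (f e))" using fin by (intro member_le_sum) (auto simp: v_nonneg)
    then show ?thesis by simp
  next
    case False
    then show ?thesis using nn by simp
  qed
  then show ?thesis unfolding bdd_def using nn by (intro exI[of _ ?B]) auto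
qed

lemma bdd_tmul:
  assumes "bdd f" "bdd g" shows "bdd (tmul f g)"
proof -
  obtain B1 B2 where B: "B1 \<ge> 0" "B2 \<ge> 0" "\<forall>e. v (f e) \<le> B1" "\<forall>e. v (g e) \<le> B2"
    using assms unfolding bdd_def by blast
  have "v (tmul f g e) \<le> B1 * B2" for e
    unfolding tmul_def
    by (rule v_sum_le) (use B in \<open>auto simp: v_mult intro!: mult_mono v_nonneg\<close>)
  then show ?thesis unfolding bdd_def using B by (intro exI[of _ "B1 * B2"]) auto
qed

lemma bdd_tscale:
  assumes "bdd f" shows "bdd (tscale c f)"
proof -
  obtain B where B: "B \<ge> 0" "\<forall>e. v (f e) \<le> B" using assms unfolding bdd_def by blast
  have "v (tscale c f e) \<le> v c * B" for e
    unfolding tscale_def using B by (auto simp: v_mult intro!: mult_left_mono v_nonneg)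
  then show ?thesis unfolding bdd_def using B by (intro exI[of _ "v c * B"]) (auto simp: v_nonneg)
qed

lemma bdd_tfrobn:
  assumes "bdd f" shows "bdd (tfrobn q n f)"
proof -
  obtain B where B: "B \<ge> 0" "\<forall>e. v (f e) \<le> B" using assms unfolding bdd_def by blast
  have "v (tfrobn q n f e) \<le> B ^ (q ^ n)" for e
    unfolding tfrobn_def using B by (auto simp: v_power intro!: power_mono v_nonneg)
  then show ?thesis unfolding bdd_def using B by (intro exI[of _ "B ^ (q ^ n)"]) auto
qed

lemma bdd_tsum_fin:
  assumes "finite K" "\<And>k. k \<in> K \<Longrightarrow> bdd (F k)" shows "bdd (tsum_fin F K)"
proof -
  have "\<forall>k\<in>K. \<exists>B\<ge>0. \<forall>e. v (F k e) \<le> B" using assms(2) unfolding bdd_def by blast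
  then obtain B where B: "\<And>k. k \<in> K \<Longrightarrow> B k \<ge> 0 \<and> (\<forall>e. v (F k e) \<le> B k)" by metis
  let ?C = "sum B K"
  have C0: "?C \<ge> 0" using B by (intro sum_nonneg) auto
  have "v (tsum_fin F K e) \<le> ?C" for e
    unfolding tsum_fin_def
  proof (rule v_sum_le[OF _ C0])
    fix k assume k: "k \<in> K"
    have "B k \<le> ?C" using k B assms(1) by (intro member_le_sum) auto
    then show "v (F k e) \<le> ?C" using B[OF k] by (meson order_trans)
  qed
  then show ?thesis unfolding bdd_def using C0 by blast
qed

lemma bdd_tone: "bdd tone"
  unfolding bdd_def tone_def tconst_def by (intro exI[of _ 1]) auto

end

section \<open>Algebra of Tate elements\<close>

lemma tmul_tzero_left[simp]: "tmul tzero g = tzero"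
  unfolding tmul_def tzero_def by simp

lemma tzero_apply[simp]: "tzero e = 0"
  unfolding tzero_def by simp

lemma tmul_tscale_left: "tmul (tscale c f) g = tscale c (tmul f g)"
  unfolding tmul_def tscale_def by (simp add: sum_distrib_left mult.assoc)

lemma tmul_tscale_right: "tmul f (tscale c g) = tscale c (tmul f g)"
  unfolding tmul_def tscale_def by (simp add: sum_distrib_left mult.left_commute)

lemma tfrobn_0[simp]: "tfrobn q 0 f = f"
  unfolding tfrobn_def by simp

lemma tfrobn_tfrobn: "tfrobn q j (tfrobn q m f) = tfrobn q (m + j) f"
  unfolding tfrobn_def by (simp add: power_mult[symmetric] power_add)

lemma tfrobn_tscale: "tfrobn q m (tscale c f) = tscale (c ^ (q ^ m)) (tfrobn q m f)"
  unfolding tfrobn_def tscale_def by (simp add: power_mult_distrib)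

lemma tfrobn_tmul:
  assumes "prime p" "of_nat p = (0::'c::field)" "q = p ^ a"
  shows "tfrobn q j (tmul f g) = tmul (tfrobn q j f) (tfrobn q j (g::'c tate))"
proof
  fix e
  have qj: "q ^ j = p ^ (a * j)" using assms(3) by (simp add: power_mult)
  show "tfrobn q j (tmul f g) e = tmul (tfrobn q j f) (tfrobn q j g) e"
    unfolding tfrobn_def tmul_def qj frob_sum[OF assms(1,2)] by (simp add: power_mult_distrib)
qed

definition fs :: "'c::field tate \<Rightarrow> bool" where
  "fs g \<longleftrightarrow> (\<forall>e. infinite {a. \<forall>i. a i \<le> e i} \<longrightarrow> g e = 0)"

lemma finite_below:
  fixes s :: nat
  assumes "\<And>i. i \<ge> s \<Longrightarrow> e i = (0::nat)"
  shows "finite {a. \<forall>i. a i \<le> e i}"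
proof -
  define M where "M = (\<Sum>i<s. e i)"
  define L where "L = {xs. set xs \<subseteq> {..M} \<and> length xs = s}"
  define h where "h = (\<lambda>(xs::nat list) (i::nat). if i < s then xs ! i else 0)"
  have fin: "finite L" unfolding L_def by (rule finite_lists_length_eq) simp
  have sub: "{a. \<forall>i. a i \<le> e i} \<subseteq> h ` L"
  proof
    fix a assume a: "a \<in> {a. \<forall>i. a i \<le> e i}"
    then have ai: "a i \<le> e i" for i by simp
    have "a i \<le> M" if "i < s" for i
    proof -
      have "e i \<le> M" unfolding M_def using that by (intro member_le_sum) auto
      then show ?thesis using ai[of i] by linarith
    qed
    then have "map a [0..<s] \<in> L" unfolding L_def by auto
    moreover have "a = h (map a [0..<s])"
    proof
      fix i show "a i = h (map a [0..<s]) i"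
      proof (cases "i < s")
        case True then show ?thesis unfolding h_def by simp
      next
        case False then have "e i = 0" using assms by simp
        then show ?thesis using ai[of i] False unfolding h_def by simp
      qed
    qed
    ultimately show "a \<in> h ` L" by (rule rev_image_eqI)
  qed
  have "finite (h ` L)" using fin by (rule finite_imageI)
  then show ?thesis using sub by (rule finite_subset[rotated])
qed

lemma in_tate_fs:
  assumes "in_tate s v f" shows "fs f"
  unfolding fs_def
proof (intro allI impI)
  fix e :: "nat \<Rightarrow> nat" assume inf: "infinite {a. \<forall>i. a i \<le> e i}"
  have "\<exists>i\<ge>s. e i \<noteq> 0"
  proof (rule ccontr)
    assume "\<not> ?thesis"
    then have "finite {a. \<forall>i. a i \<le> e i}" by (intro finite_below[of s]) auto
    then show False using inf by simp
  qed
  then show "f e = 0" using assms unfolding in_tate_def by blast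
qed

lemma tmul_tone:
  assumes "fs g" shows "tmul tone g = g"
proof
  fix e
  show "tmul tone g e = g e"
  proof (cases "finite {a. \<forall>i. a i \<le> e i}")
    case False
    then show ?thesis using assms unfolding fs_def tmul_def by simp
  next
    case True
    have "tmul tone g e = (\<Sum>a\<in>{a. \<forall>i. a i \<le> e i}. if a = (\<lambda>_. 0) then g e else 0)"
      unfolding tmul_def tone_def tconst_def
      by (intro sum.cong refl) (auto simp: fun_eq_iff)
    also have "\<dots> = g e" using True by (subst sum.delta) auto
    finally show ?thesis .
  qed
qed

lemma fs_tone: "fs tone"
  unfolding fs_def tone_def tconst_def
proof (intro allI impI)
  fix e :: "nat \<Rightarrow> nat" assume inf: "infinite {a. \<forall>i. a i \<le> e i}"
  have "\<not> (\<forall>i. e i = 0)"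
  proof
    assume "\<forall>i. e i = 0"
    then have "finite {a. \<forall>i. a i \<le> e i}" by (intro finite_below[of 0]) auto
    then show False using inf by simp
  qed
  then show "(if \<forall>i. e i = 0 then 1 else 0) = 0" by auto
qed

lemma fs_tmul: "fs (tmul f g)"
  unfolding fs_def tmul_def by simp

lemma fs_tscale: "fs f \<Longrightarrow> fs (tscale c f)"
  unfolding fs_def tscale_def by simp

lemma fs_tfrobn: "q > 0 \<Longrightarrow> fs f \<Longrightarrow> fs (tfrobn q n f)"
  unfolding fs_def tfrobn_def by simp

lemma fs_tsum_fin: "(\<And>k. k \<in> K \<Longrightarrow> fs (F k)) \<Longrightarrow> fs (tsum_fin F K)"
  unfolding fs_def tsum_fin_def by simp


section \<open>The exponential coefficients\<close>

lemma tsum_fin_cong[fundef_cong]: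
  "K = K' \<Longrightarrow> (\<And>k. k \<in> K' \<Longrightarrow> F k = G k) \<Longrightarrow> tsum_fin F K = tsum_fin G K'"
  unfolding tsum_fin_def by (intro ext sum.cong) auto

function alpha_seq :: "nat \<Rightarrow> 'c::field \<Rightarrow> nat \<Rightarrow> (nat \<Rightarrow> 'c tate) \<Rightarrow> nat \<Rightarrow> 'c tate" where
  "alpha_seq q \<theta> r A i = (if i = 0 then tone else
     tscale (inverse (\<theta> ^ (q ^ i) - \<theta>))
       (tsum_fin (\<lambda>k. tmul (A k) (tfrobn q k (alpha_seq q \<theta> r A (i - k)))) {k. 1 \<le> k \<and> k \<le> r \<and> k \<le> i}))"
  by pat_completeness auto
termination by (relation "measure (\<lambda>(q, \<theta>, r, A, i). i)") auto

declare alpha_seq.simps[simp del]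

lemma alpha_rel:
  assumes "\<And>i. i \<ge> 1 \<Longrightarrow> \<theta> ^ (q ^ i) \<noteq> \<theta>"
  shows "exp_rel q \<theta> r A (alpha_seq q \<theta> r A)"
  unfolding exp_rel_def
proof (intro conjI allI)
  show "alpha_seq q \<theta> r A 0 = tone" by (simp add: alpha_seq.simps)
next
  fix i
  show "tscale (\<theta> ^ q ^ i) (alpha_seq q \<theta> r A i) =
    tadd (tscale \<theta> (alpha_seq q \<theta> r A i))
     (tsum_fin (\<lambda>k. tmul (A k) (tfrobn q k (alpha_seq q \<theta> r A (i - k)))) {k. 1 \<le> k \<and> k \<le> r \<and> k \<le> i})"
  proof (cases "i = 0")
    case True
    have e: "{k. 1 \<le> k \<and> k \<le> r \<and> k \<le> i} = {}" using True by auto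
    show ?thesis unfolding e using True by (simp add: tscale_def tadd_def tsum_fin_def)
  next
    case False
    let ?R = "tsum_fin (\<lambda>k. tmul (A k) (tfrobn q k (alpha_seq q \<theta> r A (i - k)))) {k. 1 \<le> k \<and> k \<le> r \<and> k \<le> i}"
    have ne: "\<theta> ^ (q ^ i) - \<theta> \<noteq> 0" using assms[of i] False by simp
    have a: "alpha_seq q \<theta> r A i = tscale (inverse (\<theta> ^ (q ^ i) - \<theta>)) ?R"
      using False by (subst alpha_seq.simps) simp
    show ?thesis
    proof
      fix e
      have "\<theta> ^ q ^ i * (inverse (\<theta> ^ q ^ i - \<theta>) * ?R e) = \<theta> * (inverse (\<theta> ^ q ^ i - \<theta>) * ?R e) + ?R e"
        using ne by (simp add: field_simps)
      then show "tscale (\<theta> ^ q ^ i) (alpha_seq q \<theta> r A i) e =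
        tadd (tscale \<theta> (alpha_seq q \<theta> r A i)) ?R e"
        unfolding a by (simp add: tscale_def tadd_def)
    qed
  qed
qed

lemma exp_rel_solve:
  assumes "exp_rel q \<theta> r A \<alpha>" "i \<ge> 1" "\<theta> ^ (q ^ i) \<noteq> \<theta>"
  shows "\<alpha> i = tscale (inverse (\<theta> ^ (q ^ i) - \<theta>))
       (tsum_fin (\<lambda>k. tmul (A k) (tfrobn q k (\<alpha> (i - k)))) {k. 1 \<le> k \<and> k \<le> r \<and> k \<le> i})"
proof
  fix e
  let ?R = "tsum_fin (\<lambda>k. tmul (A k) (tfrobn q k (\<alpha> (i - k)))) {k. 1 \<le> k \<and> k \<le> r \<and> k \<le> i}"
  have "tscale (\<theta> ^ (q ^ i)) (\<alpha> i) e = tadd (tscale \<theta> (\<alpha> i)) ?R e"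
    using assms(1) unfolding exp_rel_def by metis
  then have "\<theta> ^ (q ^ i) * \<alpha> i e = \<theta> * \<alpha> i e + ?R e" by (simp add: tscale_def tadd_def)
  then have "(\<theta> ^ (q ^ i) - \<theta>) * \<alpha> i e = ?R e" by (simp add: algebra_simps)
  moreover have "\<theta> ^ (q ^ i) - \<theta> \<noteq> 0" using assms(3) by simp
  ultimately show "\<alpha> i e = tscale (inverse (\<theta> ^ (q ^ i) - \<theta>)) ?R e"
    by (simp add: tscale_def field_simps)
qed

lemma exp_rel_unique:
  assumes "exp_rel q \<theta> r A \<alpha>" "exp_rel q \<theta> r A \<beta>" "\<And>i. i \<ge> 1 \<Longrightarrow> \<theta> ^ (q ^ i) \<noteq> \<theta>"
  shows "\<alpha> = \<beta>"
proof
  fix i show "\<alpha> i = \<beta> i"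
  proof (induction i rule: less_induct)
    case (less i)
    show ?case
    proof (cases "i = 0")
      case True
      then show ?thesis using assms(1,2) unfolding exp_rel_def by simp
    next
      case False
      then have i1: "i \<ge> 1" by simp
      have "tsum_fin (\<lambda>k. tmul (A k) (tfrobn q k (\<alpha> (i - k)))) {k. 1 \<le> k \<and> k \<le> r \<and> k \<le> i}
          = tsum_fin (\<lambda>k. tmul (A k) (tfrobn q k (\<beta> (i - k)))) {k. 1 \<le> k \<and> k \<le> r \<and> k \<le> i}"
        using less by (intro tsum_fin_cong) auto
      then show ?thesis
        using exp_rel_solve[OF assms(1) i1 assms(3)[OF i1]] exp_rel_solve[OF assms(2) i1 assms(3)[OF i1]]
        by simp
    qed
  qed
qed

lemma exp_coeffs_eq:
  assumes "\<And>i. i \<ge> 1 \<Longrightarrow> \<theta> ^ (q ^ i) \<noteq> \<theta>"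
  shows "exp_coeffs q \<theta> r A = alpha_seq q \<theta> r A"
  unfolding exp_coeffs_def
  using alpha_rel[OF assms] exp_rel_unique[OF _ _ assms] by blast

lemma fs_alpha: "fs (alpha_seq q \<theta> r A i)"
  by (subst alpha_seq.simps) (auto intro!: fs_tone fs_tscale fs_tsum_fin fs_tmul)

lemma (in ultra) bdd_alpha:
  assumes "\<And>k. 1 \<le> k \<Longrightarrow> k \<le> r \<Longrightarrow> bdd (A k)"
  shows "bdd (alpha_seq q \<theta> r A i)"
proof (induction i rule: less_induct)
  case (less i)
  show ?case
  proof (cases "i = 0")
    case True
    then show ?thesis by (simp add: alpha_seq.simps bdd_tone)
  next
    case False
    then show ?thesis
      by (subst alpha_seq.simps)
        (auto intro!: bdd_tscale bdd_tsum_fin bdd_tmul bdd_tfrobn assms less)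
  qed
qed

section \<open>The coefficients of F_eta\<close>

lemma F_rel_unique:
  assumes "F_rel q \<theta> \<alpha> \<eta> c" "F_rel q \<theta> \<alpha> \<eta> d" "\<And>i. i \<ge> 1 \<Longrightarrow> \<theta> ^ (q ^ i) \<noteq> \<theta>"
  shows "c = d"
proof (intro ext)
  fix i e
  show "c i e = d i e"
  proof (cases "i = 0")
    case True
    then show ?thesis using assms(1,2) unfolding F_rel_def by simp
  next
    case False
    let ?R = "tsum_fin (\<lambda>k. tmul (\<eta> k) (tfrobn q k (\<alpha> (i - k)))) {k. 1 \<le> k \<and> k \<le> i}"
    have "tadd (tscale (\<theta> ^ (q ^ i)) (c i)) (tneg (tscale \<theta> (c i))) = ?R"
      using assms(1) unfolding F_rel_def by (elim conjE allE[of _ i])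
    moreover have "tadd (tscale (\<theta> ^ (q ^ i)) (d i)) (tneg (tscale \<theta> (d i))) = ?R"
      using assms(2) unfolding F_rel_def by (elim conjE allE[of _ i])
    ultimately have "tadd (tscale (\<theta> ^ (q ^ i)) (c i)) (tneg (tscale \<theta> (c i))) e =
       tadd (tscale (\<theta> ^ (q ^ i)) (d i)) (tneg (tscale \<theta> (d i))) e" by simp
    then have "(\<theta> ^ (q ^ i) - \<theta>) * c i e = (\<theta> ^ (q ^ i) - \<theta>) * d i e"
      by (simp add: tadd_def tscale_def tneg_def algebra_simps)
    moreover have "\<theta> ^ (q ^ i) - \<theta> \<noteq> 0" using assms(3)[of i] False by simp
    ultimately show ?thesis by simp
  qed
qed

lemma F_coeffs_eqI:
  assumes "F_rel q \<theta> (exp_coeffs q \<theta> r A) \<eta> c" "\<And>i. i \<ge> 1 \<Longrightarrow> \<theta> ^ (q ^ i) \<noteq> \<theta>"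
  shows "F_coeffs q \<theta> r A \<eta> = c"
  unfolding F_coeffs_def
  by (rule the_equality[where P="\<lambda>x. F_rel q \<theta> (exp_coeffs q \<theta> r A) \<eta> x", OF assms(1)])
    (rule F_rel_unique[OF _ assms(1) assms(2)])

lemma F_rel_delta0:
  assumes "exp_rel q \<theta> r A \<alpha>"
  shows "F_rel q \<theta> \<alpha> (delta0 r A) (\<lambda>i. if i = 0 then tzero else \<alpha> i)"
  unfolding F_rel_def
proof (intro conjI allI)
  fix i
  show "tadd (tscale (\<theta> ^ q ^ i) (if i = 0 then tzero else \<alpha> i)) (tneg (tscale \<theta> (if i = 0 then tzero else \<alpha> i))) =
        tsum_fin (\<lambda>k. tmul (delta0 r A k) (tfrobn q k (\<alpha> (i - k)))) {k. 1 \<le> k \<and> k \<le> i}"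
  proof (cases "i = 0")
    case True
    have e: "{k. 1 \<le> k \<and> k \<le> i} = {}" using True by auto
    show ?thesis unfolding e using True by (simp add: tscale_def tadd_def tsum_fin_def tneg_def tzero_def)
  next
    case False
    let ?R = "tsum_fin (\<lambda>k. tmul (A k) (tfrobn q k (\<alpha> (i - k)))) {k. 1 \<le> k \<and> k \<le> r \<and> k \<le> i}"
    have R: "tsum_fin (\<lambda>k. tmul (delta0 r A k) (tfrobn q k (\<alpha> (i - k)))) {k. 1 \<le> k \<and> k \<le> i} = ?R"
    proof
      fix e
      have se: "{k. 1 \<le> k \<and> k \<le> r \<and> k \<le> i} = {k \<in> {k. 1 \<le> k \<and> k \<le> i}. k \<le> r}" by auto
      have "?R e = (\<Sum>k\<in>{k \<in> {k. 1 \<le> k \<and> k \<le> i}. k \<le> r}. tmul (A k) (tfrobn q k (\<alpha> (i - k))) e)"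
        unfolding tsum_fin_def se by (rule refl)
      also have "\<dots> = (\<Sum>k\<in>{k. 1 \<le> k \<and> k \<le> i}. if k \<le> r then tmul (A k) (tfrobn q k (\<alpha> (i - k))) e else 0)"
        by (rule sum.inter_filter) simp
      finally have "?R e = (\<Sum>k\<in>{k. 1 \<le> k \<and> k \<le> i}. if k \<le> r then tmul (A k) (tfrobn q k (\<alpha> (i - k))) e else 0)" .
      then show "tsum_fin (\<lambda>k. tmul (delta0 r A k) (tfrobn q k (\<alpha> (i - k)))) {k. 1 \<le> k \<and> k \<le> i} e = ?R e"
        unfolding tsum_fin_def delta0_def by (auto intro!: sum.cong simp: tzero_def tmul_def)
    qed
    show ?thesis
    proof
      fix e
      have "tscale (\<theta> ^ (q ^ i)) (\<alpha> i) = tadd (tscale \<theta> (\<alpha> i)) ?R"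
        using assms(1) unfolding exp_rel_def by (elim conjE allE[of _ i])
      then have "tscale (\<theta> ^ (q ^ i)) (\<alpha> i) e = tadd (tscale \<theta> (\<alpha> i)) ?R e" by simp
      then show "tadd (tscale (\<theta> ^ q ^ i) (if i = 0 then tzero else \<alpha> i)) (tneg (tscale \<theta> (if i = 0 then tzero else \<alpha> i))) e =
        tsum_fin (\<lambda>k. tmul (delta0 r A k) (tfrobn q k (\<alpha> (i - k)))) {k. 1 \<le> k \<and> k \<le> i} e"
        using False unfolding R by (simp add: tscale_def tadd_def tneg_def)
    qed
  qed
qed (simp)

lemma F_rel_deltaj:
  assumes "j \<ge> 1" "\<And>i. fs (\<alpha> i)" "q > 0"
    "\<And>i. i \<ge> 1 \<Longrightarrow> \<theta> ^ (q ^ i) \<noteq> \<theta>"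
  shows "F_rel q \<theta> \<alpha> (deltaj j)
     (\<lambda>i. if j \<le> i then tscale (inverse (\<theta> ^ (q ^ i) - \<theta>)) (tfrobn q j (\<alpha> (i - j))) else tzero)"
  unfolding F_rel_def
proof (intro conjI allI)
  show "(if j \<le> 0 then tscale (inverse (\<theta> ^ (q ^ 0) - \<theta>)) (tfrobn q j (\<alpha> (0 - j))) else tzero) = tzero"
    using assms(1) by simp
next
  fix i
  let ?c = "(if j \<le> i then tscale (inverse (\<theta> ^ (q ^ i) - \<theta>)) (tfrobn q j (\<alpha> (i - j))) else tzero)"
  show "tadd (tscale (\<theta> ^ q ^ i) ?c) (tneg (tscale \<theta> ?c)) =
        tsum_fin (\<lambda>k. tmul (deltaj j k) (tfrobn q k (\<alpha> (i - k)))) {k. 1 \<le> k \<and> k \<le> i}"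
  proof
    fix e
    have "tsum_fin (\<lambda>k. tmul (deltaj j k) (tfrobn q k (\<alpha> (i - k)))) {k. 1 \<le> k \<and> k \<le> i} e
        = (\<Sum>k\<in>{k. 1 \<le> k \<and> k \<le> i}. if k = j then tfrobn q j (\<alpha> (i - j)) e else 0)"
      unfolding tsum_fin_def deltaj_def
      by (intro sum.cong refl) (auto simp: tmul_tone fs_tfrobn assms(2,3))
    also have "\<dots> = (if j \<le> i then tfrobn q j (\<alpha> (i - j)) e else 0)"
      using assms(1) by (subst sum.delta) auto
    finally have R: "tsum_fin (\<lambda>k. tmul (deltaj j k) (tfrobn q k (\<alpha> (i - k)))) {k. 1 \<le> k \<and> k \<le> i} e
        = (if j \<le> i then tfrobn q j (\<alpha> (i - j)) e else 0)" .
    show "tadd (tscale (\<theta> ^ q ^ i) ?c) (tneg (tscale \<theta> ?c)) e =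
        tsum_fin (\<lambda>k. tmul (deltaj j k) (tfrobn q k (\<alpha> (i - k)))) {k. 1 \<le> k \<and> k \<le> i} e"
    proof (cases "j \<le> i")
      case True
      then have ne: "\<theta> ^ (q ^ i) - \<theta> \<noteq> 0" using assms(1) assms(4)[of i] by simp
      let ?D = "\<theta> ^ (q ^ i) - \<theta>" and ?X = "tfrobn q j (\<alpha> (i - j)) e"
      have "\<theta> ^ (q ^ i) * (inverse ?D * ?X) + - (\<theta> * (inverse ?D * ?X)) = (?D * inverse ?D) * ?X"
        by (simp add: algebra_simps)
      also have "\<dots> = ?X" using ne by simp
      finally show ?thesis unfolding R using True
        by (simp add: tscale_def tadd_def tneg_def)
    next
      case False
      then show ?thesis unfolding R by (simp add: tscale_def tadd_def tneg_def tzero_def)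
    qed
  qed
qed

context ultra begin

lemma csums_frob:
  assumes "prime p" "of_nat p = (0::'c)" "csums g s"
  shows "csums (\<lambda>n. (g n) ^ (p ^ k)) (s ^ (p ^ k))"
  unfolding csums_def
proof (intro allI impI)
  fix \<epsilon> :: real assume ep: "\<epsilon> > 0"
  then obtain N where N: "\<forall>n\<ge>N. v (sum g {..<n} - s) < min \<epsilon> 1"
    using assms(3) unfolding csums_def by (metis min_less_iff_conj zero_less_one)
  show "\<exists>N. \<forall>n\<ge>N. v (sum (\<lambda>n. g n ^ p ^ k) {..<n} - s ^ p ^ k) < \<epsilon>"
  proof (intro exI allI impI)
    fix n assume n: "n \<ge> N"
    let ?x = "sum g {..<n} - s"
    have "sum (\<lambda>n. g n ^ p ^ k) {..<n} = (sum g {..<n}) ^ p ^ k"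
      by (rule frob_sum[OF assms(1,2), symmetric])
    then have eq: "sum (\<lambda>n. g n ^ p ^ k) {..<n} - s ^ p ^ k = ?x ^ (p ^ k)"
      using frob_diff[OF assms(1,2), of "sum g {..<n}" s k] by simp
    have x1: "v ?x < min \<epsilon> 1" using N n by simp
    have pk: "p ^ k \<ge> 1" using assms(1) prime_gt_0_nat by (simp add: Suc_leI)
    have "v ?x ^ (p ^ k) \<le> v ?x ^ 1"
      by (rule power_decreasing[OF pk]) (use x1 v_nonneg in auto)
    then show "v (sum (\<lambda>n. g n ^ p ^ k) {..<n} - s ^ p ^ k) < \<epsilon>"
      unfolding eq v_power using x1 by simp
  qed
qed

lemma gap:
  assumes "v \<theta> = real q" "q \<ge> 2" "n \<ge> 1" "v (z - \<theta>) \<le> 1"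
  shows "v (\<theta> ^ (q ^ n) - z) \<ge> 1"
proof (rule ccontr)
  assume "\<not> ?thesis"
  then have lt: "v (\<theta> ^ (q ^ n) - z) < 1" by simp
  have vz: "v z \<le> real q"
    using v_ultra[of "z - \<theta>" \<theta>] assms by simp
  have "v (\<theta> ^ (q ^ n)) \<le> max (v (\<theta> ^ (q ^ n) - z)) (v z)"
    using v_ultra[of "\<theta> ^ (q ^ n) - z" z] by simp
  moreover have "max (v (\<theta> ^ (q ^ n) - z)) (v z) \<le> real q" using lt vz assms(2) by simp
  moreover have "v (\<theta> ^ (q ^ n)) = real q ^ (q ^ n)" using assms(1) by (simp add: v_power)
  ultimately have le: "real q ^ (q ^ n) \<le> real q" by linarith
  have "q ^ n \<ge> 2"
  proof -
    have "q ^ 1 \<le> q ^ n" using assms(2,3) by (intro power_increasing) auto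
    then show ?thesis using assms(2) by simp
  qed
  then have "real q ^ 2 \<le> real q ^ (q ^ n)" using assms(2) by (intro power_increasing) auto
  moreover have "real q < real q ^ 2" using assms(2) by (simp add: power2_eq_square)
  ultimately show False using le by linarith
qed

end


lemma geom_tail:
  fixes \<theta> :: "'c::field"
  assumes "\<theta> \<noteq> 0" "\<theta> ^ Q \<noteq> \<theta>"
  shows "inverse (\<theta> ^ Q - \<theta>) - (\<Sum>n<N. \<theta> ^ n * (inverse (\<theta> ^ (n + 1))) ^ Q)
       = (\<theta> * inverse (\<theta> ^ Q)) ^ N * inverse (\<theta> ^ Q - \<theta>)"
proof (induction N)
  case 0
  then show ?case by simp
next
  case (Suc N)
  define x where "x = inverse \<theta>"
  define w where "w = \<theta> * inverse (\<theta> ^ Q)"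
  define iD where "iD = inverse (\<theta> ^ Q - \<theta>)"
  have xQ: "inverse (\<theta> ^ Q) = x ^ Q" unfolding x_def by (simp add: power_inverse)
  have t1: "\<theta> ^ N * (inverse (\<theta> ^ (N + 1))) ^ Q = w ^ N * x ^ Q"
  proof -
    have "inverse (\<theta> ^ (N + 1)) = x ^ (N + 1)" unfolding x_def by (simp add: power_inverse)
    then have "(inverse (\<theta> ^ (N + 1))) ^ Q = x ^ ((N + 1) * Q)" by (simp only: power_mult)
    also have "(N + 1) * Q = Q * N + Q" by simp
    also have "x ^ (Q * N + Q) = (x ^ Q) ^ N * x ^ Q" by (simp only: power_add power_mult)
    finally have "(inverse (\<theta> ^ (N + 1))) ^ Q = (x ^ Q) ^ N * x ^ Q" .
    moreover have "w ^ N = \<theta> ^ N * (x ^ Q) ^ N" unfolding w_def xQ by (simp add: power_mult_distrib)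
    ultimately show ?thesis by (simp add: mult.assoc)
  qed
  have D: "\<theta> ^ Q - \<theta> \<noteq> 0" using assms(2) by simp
  have xt: "x ^ Q * \<theta> ^ Q = 1" unfolding x_def using assms(1) by (simp add: power_mult_distrib[symmetric])
  have key: "iD - x ^ Q = w * iD"
  proof -
    have "iD * (\<theta> ^ Q - \<theta>) = 1" unfolding iD_def using D by simp
    then have "(iD - x ^ Q) * (\<theta> ^ Q - \<theta>) = 1 - x ^ Q * (\<theta> ^ Q - \<theta>)"
      by (simp only: left_diff_distrib)
    also have "\<dots> = x ^ Q * \<theta>" using xt by (simp add: algebra_simps)
    also have "\<dots> = w * iD * (\<theta> ^ Q - \<theta>)" unfolding w_def iD_def xQ using D by simp
    finally show ?thesis using D by simp
  qed
  have "inverse (\<theta> ^ Q - \<theta>) - (\<Sum>n<Suc N. \<theta> ^ n * (inverse (\<theta> ^ (n + 1))) ^ Q)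
      = w ^ N * iD - w ^ N * x ^ Q" using Suc.IH t1 unfolding w_def iD_def by simp
  also have "\<dots> = w ^ N * (iD - x ^ Q)" by (simp add: algebra_simps)
  also have "\<dots> = w ^ Suc N * iD" unfolding key by simp
  finally show ?case unfolding w_def iD_def .
qed


lemma sum_drop0:
  fixes f :: "nat \<Rightarrow> 'c::ab_group_add"
  assumes "n \<ge> 1"
  shows "(\<Sum>k<n. if k = 0 then 0 else f k) = (\<Sum>k<n. f k) - f 0"
proof -
  have "(\<Sum>k<n. f k) = f 0 + (\<Sum>k\<in>{..<n} - {0}. f k)"
    using assms by (subst sum.remove[of _ 0]) auto
  moreover have "(\<Sum>k<n. if k = 0 then 0 else f k) = (\<Sum>k\<in>{..<n} - {0}. f k)"
    using assms by (subst sum.remove[of _ 0]) (auto intro!: sum.cong)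
  ultimately show ?thesis by simp
qed

context ultra begin

lemma v_inv_le1: "v x \<ge> 1 \<Longrightarrow> v (inverse x) \<le> 1"
  by (simp add: v_inverse inverse_le_1_iff)

lemma uniform_bound:
  fixes b :: "nat \<Rightarrow> 'c tate"
  assumes "\<And>m. bdd (b m)" "\<And>\<epsilon>. \<epsilon> > 0 \<Longrightarrow> \<exists>N. \<forall>n\<ge>N. \<forall>e. v (b n e) < \<epsilon>"
  shows "\<exists>B\<ge>0. \<forall>m e. v (b m e) \<le> B"
proof -
  obtain N where N: "\<forall>n\<ge>N. \<forall>e. v (b n e) < 1" using assms(2)[of 1] by auto
  have "\<forall>m. \<exists>B\<ge>0. \<forall>e. v (b m e) \<le> B" using assms(1) unfolding bdd_def by blast
  then obtain Bf where Bf: "\<And>m. Bf m \<ge> 0 \<and> (\<forall>e. v (b m e) \<le> Bf m)" by metis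
  let ?B = "1 + (\<Sum>m<N. Bf m)"
  have S0: "(\<Sum>m<N. Bf m) \<ge> 0" using Bf by (intro sum_nonneg) auto
  have "v (b m e) \<le> ?B" for m e
  proof (cases "m < N")
    case True
    have "Bf m \<le> (\<Sum>m<N. Bf m)" using True Bf by (intro member_le_sum) auto
    moreover have "v (b m e) \<le> Bf m" using Bf[of m] by blast
    ultimately show ?thesis by linarith
  next
    case False
    then have "v (b m e) < 1" using N by simp
    then show ?thesis using S0 by linarith
  qed
  then show ?thesis using S0 by (intro exI[of _ ?B]) auto
qed

lemma partB_bound:
  assumes th0: "\<theta> \<noteq> 0" and vth: "v \<theta> = real q" and q2: "q \<ge> 2" and j1: "j \<ge> 1"
    and hF: "csums (\<lambda>m. inverse (\<theta> ^ (q ^ (m + j)) - \<theta>) * d m) F"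
    and hH: "\<And>n. csums (\<lambda>m. \<theta> ^ n * ((inverse (\<theta> ^ (n + 1))) ^ (q ^ (m + j)) * d m)) (H n)"
    and hd: "\<And>m. v (d m) \<le> Bd" and Bd: "Bd \<ge> 0"
  shows "v (F - (\<Sum>n<N. H n)) \<le> (1 / real q) ^ N * Bd"
proof -
  have hS: "csums (\<lambda>m. \<Sum>n<N. \<theta> ^ n * ((inverse (\<theta> ^ (n + 1))) ^ (q ^ (m + j)) * d m)) (\<Sum>n<N. H n)"
  proof (rule csums_sum)
    fix n :: nat assume "n \<in> {..<N}"
    show "csums (\<lambda>m. \<theta> ^ n * ((inverse (\<theta> ^ (n + 1))) ^ (q ^ (m + j)) * d m)) (H n)" by (rule hH)
  qed simp
  have hD: "csums (\<lambda>m. inverse (\<theta> ^ (q ^ (m + j)) - \<theta>) * d m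
        - (\<Sum>n<N. \<theta> ^ n * ((inverse (\<theta> ^ (n + 1))) ^ (q ^ (m + j)) * d m))) (F - (\<Sum>n<N. H n))"
    by (rule csums_diff[OF hF hS])
  show ?thesis
  proof (rule csums_bound[OF hD])
    show "0 \<le> (1 / real q) ^ N * Bd" using Bd by simp
  next
    fix m
    let ?Q = "q ^ (m + j)"
    have Q1: "m + j \<ge> 1" using j1 by simp
    have gapQ: "v (\<theta> ^ ?Q - \<theta>) \<ge> 1" using gap[OF vth q2 Q1, of \<theta>] by simp
    then have neQ: "\<theta> ^ ?Q \<noteq> \<theta>" by auto
    have eq: "inverse (\<theta> ^ ?Q - \<theta>) * d m - (\<Sum>n<N. \<theta> ^ n * ((inverse (\<theta> ^ (n + 1))) ^ ?Q * d m))
        = (inverse (\<theta> ^ ?Q - \<theta>) - (\<Sum>n<N. \<theta> ^ n * (inverse (\<theta> ^ (n + 1))) ^ ?Q)) * d m"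
      by (simp add: sum_distrib_right left_diff_distrib mult.assoc)
    also have "\<dots> = (\<theta> * inverse (\<theta> ^ ?Q)) ^ N * inverse (\<theta> ^ ?Q - \<theta>) * d m"
      using geom_tail[OF th0 neQ, of N] by simp
    finally have eq2: "inverse (\<theta> ^ ?Q - \<theta>) * d m - (\<Sum>n<N. \<theta> ^ n * ((inverse (\<theta> ^ (n + 1))) ^ ?Q * d m))
        = (\<theta> * inverse (\<theta> ^ ?Q)) ^ N * inverse (\<theta> ^ ?Q - \<theta>) * d m" .
    have qQ: "q \<le> ?Q"
    proof -
      have "q ^ 1 \<le> q ^ (m + j)" using q2 Q1 by (intro power_increasing) auto
      then show ?thesis by simp
    qed
    have qpos: "real q > 0" using q2 by simp
    have vw: "v (\<theta> * inverse (\<theta> ^ ?Q)) \<le> 1 / real q"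
    proof -
      have "v (\<theta> * inverse (\<theta> ^ ?Q)) = real q / real q ^ ?Q"
        using vth by (simp add: v_mult v_inverse v_power divide_inverse)
      also have "\<dots> \<le> 1 / real q"
      proof -
        have "real q ^ 2 \<le> real q ^ ?Q"
          using q2 qQ by (intro power_increasing) auto
        then show ?thesis using qpos by (simp add: field_simps power2_eq_square)
      qed
      finally show ?thesis .
    qed
    have "v ((\<theta> * inverse (\<theta> ^ ?Q)) ^ N * inverse (\<theta> ^ ?Q - \<theta>) * d m)
        = v (\<theta> * inverse (\<theta> ^ ?Q)) ^ N * v (inverse (\<theta> ^ ?Q - \<theta>)) * v (d m)"
      by (simp add: v_mult v_power)
    also have "\<dots> \<le> (1 / real q) ^ N * 1 * Bd"
      by (intro mult_mono power_mono vw v_inv_le1 gapQ hd) (auto simp: v_nonneg)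
    finally show "v (inverse (\<theta> ^ ?Q - \<theta>) * d m
        - (\<Sum>n<N. \<theta> ^ n * ((inverse (\<theta> ^ (n + 1))) ^ ?Q * d m))) \<le> (1 / real q) ^ N * Bd"
      unfolding eq2 by simp
  qed
qed

end


theorem proposition5p7:
  fixes q s r :: nat and v :: "'c::field \<Rightarrow> real" and \<theta> :: 'c
    and A :: "nat \<Rightarrow> 'c tate" and lam :: "'c tate"
  assumes Cinf: "is_Cinf q v \<theta>"
    and rank: "r \<ge> 1"
    and coeffs: "\<forall>k. 1 \<le> k \<and> k \<le> r \<longrightarrow> in_tate s v (A k)"
    and unit: "\<exists>B. in_tate s v B \<and> tmul (A r) B = tone"
    and lam_in: "lam \<in> period_lattice s v q \<theta> r A"
  shows "tate_sums v (\<lambda>i. tmul (F_coeffs q \<theta> r A (delta0 r A) i) (tfrobn q i lam)) (tneg lam)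
       \<and> agf_has_residue_at_theta v q \<theta> r A lam (tneg lam)
       \<and> (\<forall>j. 1 \<le> j \<and> j \<le> r - 1 \<longrightarrow>
            (let Fv = tau_apply v q (F_coeffs q \<theta> r A (deltaj j)) lam in
               tate_sums v (\<lambda>i. tmul (F_coeffs q \<theta> r A (deltaj j) i) (tfrobn q i lam)) Fv
             \<and> tate_sums v (\<lambda>n. tscale (\<theta> ^ n) (tfrobn q j (agf_coeff v q \<theta> r A lam n))) Fv
             \<and> agf_twist_eval v q \<theta> r A lam j \<theta> = Fv))"
proof -
  obtain p e0 where p: "prime p" "e0 > 0" "q = p ^ e0" "of_nat p = (0::'c)"
    using Cinf unfolding is_Cinf_def by blast
  interpret ultra v
  proof
    fix x y :: 'c
    show "v x \<ge> 0" using Cinf unfolding is_Cinf_def by blast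
    show "v x = 0 \<longleftrightarrow> x = 0" using Cinf unfolding is_Cinf_def by blast
    show "v (x * y) = v x * v y" using Cinf unfolding is_Cinf_def by blast
    show "v (x + y) \<le> max (v x) (v y)" using Cinf unfolding is_Cinf_def by blast
  next
    fix X :: "nat \<Rightarrow> 'c"
    assume "\<forall>\<epsilon>>0. \<exists>N. \<forall>m\<ge>N. \<forall>n\<ge>N. v (X m - X n) < \<epsilon>"
    then show "\<exists>L. \<forall>\<epsilon>>0. \<exists>N. \<forall>n\<ge>N. v (X n - L) < \<epsilon>" using Cinf unfolding is_Cinf_def by blast
  qed
  have vth: "v \<theta> = real q" using Cinf unfolding is_Cinf_def by blast
  have q2: "q \<ge> 2"
  proof -
    have "p \<ge> 2" using p(1) by (rule prime_ge_2_nat)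
    moreover have "p ^ 1 \<le> p ^ e0" using p(2) \<open>p \<ge> 2\<close> by (intro power_increasing) auto
    ultimately show ?thesis using p(3) by simp
  qed
  have qpos: "q > 0" using q2 by simp
  have th0: "\<theta> \<noteq> 0" using vth q2 by auto
  have neq: "\<theta> ^ (q ^ i) \<noteq> \<theta>" if "i \<ge> 1" for i
  proof -
    have "v (\<theta> ^ (q ^ i) - \<theta>) \<ge> 1" using gap[OF vth q2 that, of \<theta>] by simp
    then show ?thesis by auto
  qed
  have vinvD: "v (inverse (\<theta> ^ (q ^ i) - z)) \<le> 1" if "i \<ge> 1" "v (z - \<theta>) \<le> 1" for i z
    using v_inv_le1[OF gap[OF vth q2 that]] .
  have qpow: "q ^ k = p ^ (e0 * k)" for k using p(3) by (simp add: power_mult)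
  define \<alpha> where "\<alpha> = exp_coeffs q \<theta> r A"
  have aeq: "\<alpha> = alpha_seq q \<theta> r A" unfolding \<alpha>_def by (rule exp_coeffs_eq[OF neq])
  have rel: "exp_rel q \<theta> r A \<alpha>" unfolding aeq by (rule alpha_rel[OF neq])
  have a0: "\<alpha> 0 = tone" using rel unfolding exp_rel_def by blast
  have fsa: "fs (\<alpha> i)" for i unfolding aeq by (rule fs_alpha)
  have bddA: "bdd (A k)" if "1 \<le> k" "k \<le> r" for k using coeffs that in_tate_bdd by blast
  have bdda: "bdd (\<alpha> i)" for i unfolding aeq by (rule bdd_alpha[OF bddA])
  have lamT: "in_tate s v lam" using lam_in unfolding period_lattice_def by blast
  define b where "b = (\<lambda>m. tmul (\<alpha> m) (tfrobn q m lam))"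
  have bsum: "tate_sums v b tzero" using lam_in unfolding period_lattice_def b_def \<alpha>_def by blast
  have b0: "b 0 = lam" unfolding b_def a0 by (simp add: tmul_tone[OF in_tate_fs[OF lamT]])
  have bto0: "\<exists>N. \<forall>n\<ge>N. \<forall>e. v (b n e) < \<epsilon>" if "\<epsilon> > 0" for \<epsilon>
    by (rule tate_sums_terms[OF bsum that])
  have bddb: "bdd (b m)" for m unfolding b_def
    by (intro bdd_tmul bdda bdd_tfrobn in_tate_bdd[OF lamT])
  obtain Bb where Bb: "Bb \<ge> 0" "\<And>m e. v (b m e) \<le> Bb"
    using uniform_bound[OF bddb bto0] by blast

  have c0: "F_coeffs q \<theta> r A (delta0 r A) = (\<lambda>i. if i = 0 then tzero else \<alpha> i)"
  proof (rule F_coeffs_eqI[OF _ neq])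
    show "F_rel q \<theta> (exp_coeffs q \<theta> r A) (delta0 r A) (\<lambda>i. if i = 0 then tzero else \<alpha> i)"
      using F_rel_delta0[OF rel] unfolding \<alpha>_def .
  qed simp
  have termsA: "(\<lambda>i. tmul (F_coeffs q \<theta> r A (delta0 r A) i) (tfrobn q i lam)) = (\<lambda>i. if i = 0 then tzero else b i)"
    unfolding c0 b_def by (intro ext) simp
  have A1: "tate_sums v (\<lambda>i. tmul (F_coeffs q \<theta> r A (delta0 r A) i) (tfrobn q i lam)) (tneg lam)"
    unfolding termsA tate_sums_def tate_tendsto_def
  proof (intro allI impI)
    fix \<epsilon> :: real assume ep: "\<epsilon> > 0"
    obtain N where N: "\<forall>n\<ge>N. \<forall>e. v (tsum_fin b {..<n} e - tzero e) < \<epsilon>"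
      using bsum ep unfolding tate_sums_def tate_tendsto_def by blast
    show "\<exists>N. \<forall>n\<ge>N. \<forall>e. v (tsum_fin (\<lambda>i. if i = 0 then tzero else b i) {..<n} e - tneg lam e) < \<epsilon>"
    proof (intro exI allI impI)
      fix n e assume n: "n \<ge> max N 1"
      have "tsum_fin (\<lambda>i. if i = 0 then tzero else b i) {..<n} e = (\<Sum>k<n. if k = 0 then 0 else b k e)"
        unfolding tsum_fin_def by (intro sum.cong) auto
      also have "\<dots> = (\<Sum>k<n. b k e) - b 0 e" using n by (intro sum_drop0) simp
      finally have "tsum_fin (\<lambda>i. if i = 0 then tzero else b i) {..<n} e - tneg lam e = tsum_fin b {..<n} e - tzero e"
        unfolding tneg_def tsum_fin_def b0 by simp
      then show "v (tsum_fin (\<lambda>i. if i = 0 then tzero else b i) {..<n} e - tneg lam e) < \<epsilon>"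
        using N n by simp
    qed
  qed

  have A2: "agf_has_residue_at_theta v q \<theta> r A lam (tneg lam)"
    unfolding agf_has_residue_at_theta_def
  proof (intro allI impI)
    fix \<epsilon> :: real assume ep: "\<epsilon> > 0"
    define \<delta> where "\<delta> = min 1 (\<epsilon> / (Bb + 1))"
    have dpos: "\<delta> > 0" unfolding \<delta>_def using ep Bb(1) by simp
    show "\<exists>\<delta>>0. \<forall>z. 0 < v (z - \<theta>) \<and> v (z - \<theta>) < \<delta> \<longrightarrow>
        (\<exists>S. tate_sums v (agf_mero_terms q \<theta> r A lam z) S \<and> (\<forall>e. v ((z - \<theta>) * S e - tneg lam e) < \<epsilon>))"
    proof (intro exI[of _ \<delta>] conjI allI impI dpos)
      fix z assume z: "0 < v (z - \<theta>) \<and> v (z - \<theta>) < \<delta>"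
      have z1: "v (z - \<theta>) \<le> 1" using z unfolding \<delta>_def by simp
      have zne: "z \<noteq> \<theta>" using z by auto
      define g where "g = agf_mero_terms q \<theta> r A lam z"
      have geq: "g n e = inverse (\<theta> ^ (q ^ n) - z) * b n e" for n e
        unfolding g_def agf_mero_terms_def b_def \<alpha>_def tscale_def by simp
      have gle: "v (g n e) \<le> v (b n e)" if "n \<ge> 1" for n e
      proof -
        have "v (g n e) = v (inverse (\<theta> ^ (q ^ n) - z)) * v (b n e)" unfolding geq by (simp add: v_mult)
        also have "\<dots> \<le> 1 * v (b n e)" by (intro mult_right_mono vinvD[OF that z1] v_nonneg)
        finally show ?thesis by simp
      qed
      have "\<exists>S. tate_sums v g S"
      proof (rule tate_sums_exists)
        fix \<epsilon>' :: real assume "\<epsilon>' > 0"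
        then obtain N where N: "\<forall>n\<ge>N. \<forall>e. v (b n e) < \<epsilon>'" using bto0 by blast
        show "\<exists>N. \<forall>n\<ge>N. \<forall>e. v (g n e) < \<epsilon>'"
        proof (intro exI[of _ "max N 1"] allI impI)
          fix n e assume n: "n \<ge> max N 1"
          then have "n \<ge> 1" "n \<ge> N" by auto
          then have "v (b n e) < \<epsilon>'" "v (g n e) \<le> v (b n e)" using N gle[of n e] by auto
          then show "v (g n e) < \<epsilon>'" by linarith
        qed
      qed
      then obtain S where S: "tate_sums v g S" by blast
      have "v ((z - \<theta>) * S e - tneg lam e) < \<epsilon>" for e
      proof -
        have cs: "csums (\<lambda>n. if n = 0 then 0 else g n e) (S e - g 0 e)"
          by (rule csums_drop0[OF tate_sums_pw[OF S]])
        have vS: "v (S e - g 0 e) \<le> Bb"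
        proof (rule csums_bound[OF cs Bb(1)])
          fix n show "v (if n = 0 then 0 else g n e) \<le> Bb"
            using gle[of n e] Bb(2)[of n e] Bb(1) by (cases "n = 0") auto
        qed
        have g0: "g 0 e = inverse (\<theta> - z) * lam e" unfolding geq b0 by simp
        have "(z - \<theta>) * S e - tneg lam e = (z - \<theta>) * (S e - g 0 e) + ((z - \<theta>) * inverse (\<theta> - z) + 1) * lam e"
          unfolding g0 tneg_def by (simp add: algebra_simps)
        also have "(z - \<theta>) * inverse (\<theta> - z) = -1"
        proof -
          have ne: "\<theta> - z \<noteq> 0" using zne by simp
          have "(z - \<theta>) * inverse (\<theta> - z) = - ((\<theta> - z) * inverse (\<theta> - z))" by (simp add: algebra_simps)
          also have "(\<theta> - z) * inverse (\<theta> - z) = 1" using ne by (rule right_inverse)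
          finally show ?thesis .
        qed
        finally have eq: "(z - \<theta>) * S e - tneg lam e = (z - \<theta>) * (S e - g 0 e)" by simp
        have "v ((z - \<theta>) * (S e - g 0 e)) = v (z - \<theta>) * v (S e - g 0 e)" by (rule v_mult)
        also have "\<dots> \<le> v (z - \<theta>) * Bb" by (intro mult_left_mono vS v_nonneg)
        also have "\<dots> < \<epsilon>"
        proof -
          have "v (z - \<theta>) < \<epsilon> / (Bb + 1)" using z unfolding \<delta>_def by simp
          then have "v (z - \<theta>) * (Bb + 1) < \<epsilon>" using Bb(1) by (simp add: field_simps)
          moreover have "v (z - \<theta>) * Bb \<le> v (z - \<theta>) * (Bb + 1)" using z by simp
          ultimately show ?thesis by linarith
        qed
        finally show ?thesis unfolding eq .
      qed
      then show "\<exists>S. tate_sums v (agf_mero_terms q \<theta> r A lam z) S \<and> (\<forall>e. v ((z - \<theta>) * S e - tneg lam e) < \<epsilon>)"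
        using S unfolding g_def by blast
    qed
  qed

  have B: "let Fv = tau_apply v q (F_coeffs q \<theta> r A (deltaj j)) lam in
               tate_sums v (\<lambda>i. tmul (F_coeffs q \<theta> r A (deltaj j) i) (tfrobn q i lam)) Fv
             \<and> tate_sums v (\<lambda>n. tscale (\<theta> ^ n) (tfrobn q j (agf_coeff v q \<theta> r A lam n))) Fv
             \<and> agf_twist_eval v q \<theta> r A lam j \<theta> = Fv" if j1: "j \<ge> 1" for j
  proof -
    define cj where "cj = (\<lambda>i. if j \<le> i then tscale (inverse (\<theta> ^ (q ^ i) - \<theta>)) (tfrobn q j (\<alpha> (i - j))) else tzero)"
    have Fj: "F_coeffs q \<theta> r A (deltaj j) = cj"
    proof (rule F_coeffs_eqI[OF _ neq])
      show "F_rel q \<theta> (exp_coeffs q \<theta> r A) (deltaj j) cj"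
        using F_rel_deltaj[OF j1 fsa qpos neq] unfolding cj_def \<alpha>_def .
    qed simp
    define Qj where "Qj = q ^ j"
    have Qj: "Qj = p ^ (e0 * j)" unfolding Qj_def by (rule qpow)
    define tm where "tm = (\<lambda>i. tmul (cj i) (tfrobn q i lam))"
    have tm_eq: "tm i e = (if j \<le> i then inverse (\<theta> ^ (q ^ i) - \<theta>) * (b (i - j) e) ^ Qj else 0)" for i e
    proof (cases "j \<le> i")
      case True
      have "tfrobn q i lam = tfrobn q j (tfrobn q (i - j) lam)" using True by (simp add: tfrobn_tfrobn)
      then have "tm i = tscale (inverse (\<theta> ^ (q ^ i) - \<theta>)) (tmul (tfrobn q j (\<alpha> (i - j))) (tfrobn q j (tfrobn q (i - j) lam)))"
        unfolding tm_def cj_def using True by (simp add: tmul_tscale_left)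
      also have "tmul (tfrobn q j (\<alpha> (i - j))) (tfrobn q j (tfrobn q (i - j) lam)) = tfrobn q j (b (i - j))"
        unfolding b_def by (rule tfrobn_tmul[OF p(1) p(4) p(3), symmetric])
      finally show ?thesis using True unfolding Qj_def by (simp add: tscale_def tfrobn_def)
    next
      case False
      then show ?thesis unfolding tm_def cj_def by simp
    qed
    have vpow: "v (y ^ Qj) \<le> v y" if "v y \<le> 1" for y
    proof -
      have "Qj \<ge> 1" unfolding Qj_def using qpos by simp
      then have "v y ^ Qj \<le> v y ^ 1" by (intro power_decreasing) (use that v_nonneg in auto)
      then show ?thesis by (simp add: v_power)
    qed
    have "\<exists>S. tate_sums v tm S"
    proof (rule tate_sums_exists)
      fix \<epsilon> :: real assume ep: "\<epsilon> > 0"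
      then obtain N where N: "\<forall>n\<ge>N. \<forall>e. v (b n e) < min \<epsilon> 1" using bto0[of "min \<epsilon> 1"] by auto
      show "\<exists>N. \<forall>n\<ge>N. \<forall>e. v (tm n e) < \<epsilon>"
      proof (intro exI[of _ "N + j"] allI impI)
        fix i e assume i: "i \<ge> N + j"
        then have ji: "j \<le> i" "i \<ge> 1" "i - j \<ge> N" using j1 by auto
        have bl: "v (b (i - j) e) < min \<epsilon> 1" using N ji(3) by blast
        have "v (tm i e) = v (inverse (\<theta> ^ (q ^ i) - \<theta>)) * v ((b (i - j) e) ^ Qj)"
          unfolding tm_eq using ji by (simp add: v_mult)
        also have "\<dots> \<le> 1 * v (b (i - j) e)"
          by (intro mult_mono vinvD[OF ji(2)] vpow) (use bl v_nonneg in auto)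
        finally show "v (tm i e) < \<epsilon>" using bl by simp
      qed
    qed
    then obtain Fv where Fv: "tate_sums v tm Fv" by blast
    have FvT: "tau_apply v q (F_coeffs q \<theta> r A (deltaj j)) lam = Fv"
      unfolding tau_apply_def Fj using tate_sums_the[OF Fv] unfolding tm_def .
    have teq: "tmul (\<alpha> m) (tfrobn q m (tscale c lam)) e = c ^ (q ^ m) * b m e" for m c e
      unfolding tfrobn_tscale tmul_tscale_right b_def by (simp add: tscale_def)
    have "\<exists>E. tate_sums v (\<lambda>m. tmul (\<alpha> m) (tfrobn q m (tscale (inverse (\<theta> ^ (n + 1))) lam))) E" for n
    proof (rule tate_sums_exists)
      fix \<epsilon> :: real assume ep: "\<epsilon> > 0"
      then obtain N where N: "\<forall>n\<ge>N. \<forall>e. v (b n e) < \<epsilon>" using bto0 by blast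
      show "\<exists>N. \<forall>m\<ge>N. \<forall>e. v (tmul (\<alpha> m) (tfrobn q m (tscale (inverse (\<theta> ^ (n + 1))) lam)) e) < \<epsilon>"
      proof (intro exI[of _ N] allI impI)
        fix m e assume m: "m \<ge> N"
        have eq: "tmul (\<alpha> m) (tfrobn q m (tscale (inverse (\<theta> ^ (n + 1))) lam)) e
            = (inverse (\<theta> ^ (n + 1))) ^ (q ^ m) * b m e"
          unfolding tfrobn_tscale tmul_tscale_right b_def by (simp add: tscale_def)
        have vc: "v ((inverse (\<theta> ^ (n + 1))) ^ (q ^ m)) \<le> 1"
        proof -
          have "v (\<theta> ^ (n + 1)) = real q ^ (n + 1)" using vth by (simp only: v_power)
          moreover have "real q ^ (n + 1) \<ge> 1" using q2 by (intro one_le_power) simp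
          ultimately have "v (\<theta> ^ (n + 1)) \<ge> 1" by simp
          then have "v (inverse (\<theta> ^ (n + 1))) \<le> 1" by (rule v_inv_le1)
          then show ?thesis by (simp add: v_power power_le_one v_nonneg)
        qed
        have "v ((inverse (\<theta> ^ (n + 1))) ^ (q ^ m) * b m e) \<le> 1 * v (b m e)"
          unfolding v_mult by (intro mult_right_mono vc v_nonneg)
        moreover have "v (b m e) < \<epsilon>" using N m by blast
        ultimately show "v (tmul (\<alpha> m) (tfrobn q m (tscale (inverse (\<theta> ^ (n + 1))) lam)) e) < \<epsilon>"
          unfolding eq by linarith
      qed
    qed
    then obtain E where E: "\<And>n. tate_sums v (\<lambda>m. tmul (\<alpha> m) (tfrobn q m (tscale (inverse (\<theta> ^ (n + 1))) lam))) (E n)"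
      by metis
    have agf: "agf_coeff v q \<theta> r A lam n = E n" for n
      unfolding agf_coeff_def exp_apply_def tau_apply_def \<alpha>_def[symmetric] using tate_sums_the[OF E] .
    define H where "H = (\<lambda>n. tscale (\<theta> ^ n) (tfrobn q j (agf_coeff v q \<theta> r A lam n)))"
    define Bd where "Bd = Bb ^ Qj"
    have Bd: "Bd \<ge> 0" unfolding Bd_def using Bb(1) by simp
    have main: "v (Fv e - (\<Sum>n<N. H n e)) \<le> (1 / real q) ^ N * Bd" for e N
    proof -
      define d where "d = (\<lambda>m. (b m e) ^ Qj)"
      have hd: "v (d m) \<le> Bd" for m
        unfolding d_def Bd_def v_power by (intro power_mono Bb(2) v_nonneg)
      have hF: "csums (\<lambda>m. inverse (\<theta> ^ (q ^ (m + j)) - \<theta>) * d m) (Fv e)"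
      proof -
        have "csums (\<lambda>i. tm i e) (Fv e)" by (rule tate_sums_pw[OF Fv])
        then have "csums (\<lambda>m. tm (m + j) e) (Fv e)"
          by (rule csums_reindex) (simp add: tm_eq)
        then show ?thesis by (rule csums_cong[rotated]) (simp add: tm_eq d_def)
      qed
      have hH: "csums (\<lambda>m. \<theta> ^ n * ((inverse (\<theta> ^ (n + 1))) ^ (q ^ (m + j)) * d m)) (H n e)" for n
      proof -
        have c1: "csums (\<lambda>m. tmul (\<alpha> m) (tfrobn q m (tscale (inverse (\<theta> ^ (n + 1))) lam)) e) (E n e)"
          by (rule tate_sums_pw[OF E])
        have "csums (\<lambda>m. (inverse (\<theta> ^ (n + 1))) ^ (q ^ m) * b m e) (E n e)"
          using c1 by (rule csums_cong[rotated]) (simp only: teq)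
        then have "csums (\<lambda>m. ((inverse (\<theta> ^ (n + 1))) ^ (q ^ m) * b m e) ^ (p ^ (e0 * j))) ((E n e) ^ (p ^ (e0 * j)))"
          by (rule csums_frob[OF p(1) p(4)])
        then have "csums (\<lambda>m. ((inverse (\<theta> ^ (n + 1))) ^ (q ^ m) * b m e) ^ Qj) ((E n e) ^ Qj)"
          unfolding Qj .
        then have "csums (\<lambda>m. \<theta> ^ n * ((inverse (\<theta> ^ (n + 1))) ^ (q ^ m) * b m e) ^ Qj) (\<theta> ^ n * (E n e) ^ Qj)"
          by (rule csums_cmult)
        moreover have "((inverse (\<theta> ^ (n + 1))) ^ (q ^ m) * b m e) ^ Qj = (inverse (\<theta> ^ (n + 1))) ^ (q ^ (m + j)) * d m" for m
          unfolding d_def Qj_def by (simp add: power_mult_distrib power_mult[symmetric] power_add)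
        moreover have "H n e = \<theta> ^ n * (E n e) ^ Qj"
          unfolding H_def agf Qj_def by (simp add: tscale_def tfrobn_def)
        ultimately show ?thesis by simp
      qed
      show ?thesis by (rule partB_bound[OF th0 vth q2 j1 hF hH hd Bd])
    qed
    have B2: "tate_sums v H Fv"
      unfolding tate_sums_def tate_tendsto_def
    proof (intro allI impI)
      fix \<epsilon> :: real assume ep: "\<epsilon> > 0"
      have "1 / real q < 1" using q2 by simp
      then obtain N where N: "(1 / real q) ^ N < \<epsilon> / (Bd + 1)"
        using real_arch_pow_inv[of "\<epsilon> / (Bd + 1)" "1 / real q"] ep Bd by auto
      show "\<exists>N. \<forall>n\<ge>N. \<forall>e. v (tsum_fin H {..<n} e - Fv e) < \<epsilon>"
      proof (intro exI[of _ N] allI impI)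
        fix n e assume n: "n \<ge> N"
        have "v (tsum_fin H {..<n} e - Fv e) = v (Fv e - (\<Sum>k<n. H k e))"
          unfolding tsum_fin_def by (rule v_commute)
        also have "\<dots> \<le> (1 / real q) ^ n * Bd" by (rule main)
        also have "\<dots> \<le> (1 / real q) ^ N * Bd"
          using n q2 Bd by (intro mult_right_mono power_decreasing) auto
        also have "\<dots> \<le> (1 / real q) ^ N * (Bd + 1)" by (intro mult_left_mono) auto
        also have "\<dots> < \<epsilon>" using N Bd by (simp add: field_simps)
        finally show "v (tsum_fin H {..<n} e - Fv e) < \<epsilon>" .
      qed
    qed
    have B3: "agf_twist_eval v q \<theta> r A lam j \<theta> = Fv"
      unfolding agf_twist_eval_def using tate_sums_the[OF B2] unfolding H_def .
    show ?thesis unfolding Let_def FvT using Fv B2 B3 unfolding tm_def H_def Fj by blast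
  qed
  show ?thesis using A1 A2 B by auto
qed

end
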